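(* Let $x^*=(u^*,q^*,\alpha^*,r^*,\delta^*,\theta^* )$ be feasible for $(\mathrm{P}_{TV})$, assume that $\nabla_\alpha Q(\alpha^* )^\top$ has full rank, that $\mathcal B(x^* )\cap\{i:Q(\alpha^* )_i=0\}=\emptyset$, and that $x^*$ is strongly stationary (there exist multipliers satisfying the stationarity system below together with $\gamma_i\ge0,\nu_i\ge0$ on $\mathcal B(x^* )$). Suppose that for every multiplier vector $(p,\lambda^x,\lambda^y,\varphi^x,\varphi^y,\rho,\sigma,\gamma,\nu)$ satisfying the M-stationarity system below, and every nonzero critical direction $d=(d_u,d_q,d_\alpha,d_r,d_\delta,d_\theta)\in\mathcal C(x^* )$, \begin{multline*} \langle\nabla^2\mathcal J(u^* )d_u,d_u\rangle-D^3\mathcal D(u^* )[p,d_u,d_u]-\Big(\sum_{i\in\mathcal I\cup\mathcal B}\|\varphi_i\|^2\Big)\|\mathbb K\|^2\|d_u\|^2-\sum_{i=1}^m(\rho_i+\nu_i)\,d_\alpha^\top\nabla^2Q_i(\alpha^* )d_\alpha\\ -\Big(\sum_{i\in\mathcal I}\|(\mathbb Kp)_i\|^2\Big)\Big(\sum_{i\in\mathcal I}(\nabla Q_i(\alpha^* )^\top d_\alpha)^2\Big)+\sum_{i\in\mathcal I}(\delta^*_i\nu_i-2)d_{\theta,i}^2+\sum_{i\in\mathcal B}(\delta^*_i\nu_i-1)d_{\theta,i}^2>0, \end{multline*} where $\mathcal I=\mathcal I(x^* )$, $\mathcal B=\mathcal B(x^* )$, $\varphi_i=(\varphi^x_i,\varphi^y_i)^\top$.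 Then $x^*$ is a strict local minimizer of $(\mathrm{P}_{TV})$.
   Context: Let $d,m,k\ge1$. Let $K_x,K_y\in\mathbb R^{m\times d}$ and define the linear map $\mathbb K:\mathbb R^d\to(\mathbb R^2)^m$ by $(\mathbb Ku)_i=((K_xu)_i,(K_yu)_i)^\top$, with operator norm $\|\mathbb K\|$. For $q=(q_1,\dots,q_m)\in(\mathbb R^2)^m$ with $q_i=(q_i^x,q_i^y)^\top$ write $q^x=(q^x_i)_i,\ q^y=(q^y_i)_i\in\mathbb R^m$ and $\mathbb K^\top q:=K_x^\top q^x+K_y^\top q^y$. Let $\mathcal D:\mathbb R^d\to\mathbb R$ be convex and three times continuously differentiable (gradient $\nabla\mathcal D$, Hessian $\nabla^2\mathcal D$, third derivative $D^3\mathcal D$ as a trilinear form), $\mathcal J:\mathbb R^d\to\mathbb R$ twice continuously differentiable, and $Q:\mathbb R^k\to\mathbb R^m$ twice continuously differentiable with components $Q_i=Q(\cdot)_i$; $\nabla_\alpha Q(\alpha)^\top\in\mathbb R^{k\times m}$ denotes the transpose of the Jacobian, "full rank" means rank $\min(k,m)$. $\circ$ is the componentwise product; $\cos,\sin$ act componentwise. Problem $(\mathrm{P}_{TV})$: minimize $\mathcal J(u)$ over $x=(u,q,\alpha,r,\delta,\theta)\in\mathbb R^d\times(\mathbb R^2)^m\times\mathbb R^k\times\mathbb R^m\times\mathbb R^m\times\mathbb R^m$ subject to $\nabla\mathcal D(u)+\mathbb K^\top q=0$; $(\mathbb Ku)_i=r_i(\cos\theta_i,\sin\theta_i)^\top$,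 $q_i=\delta_i(\cos\theta_i,\sin\theta_i)^\top$ ($i=1,\dots,m$); $Q(\alpha)\ge0$; $\delta\ge0$; $0\le r_i\perp(Q(\alpha)_i-\delta_i)\ge0$ ($i=1,\dots,m$). Index sets: $\mathcal A(x)=\{i:r_i=0,Q(\alpha)_i>\delta_i\}$, $\mathcal I(x)=\{i:r_i>0,Q(\alpha)_i=\delta_i\}$, $\mathcal B(x)=\{i:r_i=0,Q(\alpha)_i=\delta_i\}$. M-stationarity system (multipliers $p\in\mathbb R^d$, $\lambda^x,\lambda^y,\varphi^x,\varphi^y,\rho,\sigma,\gamma,\nu\in\mathbb R^m$): $\nabla\mathcal J(u^* )-\nabla^2\mathcal D(u^* )p-K_x^\top\varphi^x-K_y^\top\varphi^y=0$; $\nabla_\alpha Q(\alpha^* )^\top(\rho+\nu)=0$; $\lambda^x=K_xp$, $\lambda^y=K_yp$; $\cos\theta^*\circ\varphi^x+\sin\theta^*\circ\varphi^y-\gamma=0$; $-\cos\theta^*\circ\lambda^x-\sin\theta^*\circ\lambda^y-\sigma+\nu=0$; $\sin\theta^*\circ(-r^*\circ\varphi^x+\delta^*\circ\lambda^x)-\cos\theta^*\circ(-r^*\circ\varphi^y+\delta^*\circ\lambda^y)=0$; $0\le Q(\alpha^* )\perp\rho\ge0$; $0\le\delta^*\perp\sigma\ge0$; $\nu_i=0$ on $\mathcal A(x^* )$; $\gamma_i=0$ on $\mathcal I(x^* )$; and on $\mathcal B(x^* )$ either $\gamma_i\nu_i=0$ or $\gamma_i,\nu_i\ge0$. Critical cone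 $\mathcal C(x^* )$: directions $d=(d_u,d_q,d_\alpha,d_r,d_\delta,d_\theta)$ with $\nabla\mathcal J(u^* )^\top d_u\le0$ and $-\nabla^2\mathcal D(u^* )d_u-K_x^\top d_q^x-K_y^\top d_q^y=0$; $-K_xd_u+\cos\theta^*\circ d_r-r^*\circ\sin\theta^*\circ d_\theta=0$; $-K_yd_u+\sin\theta^*\circ d_r+r^*\circ\cos\theta^*\circ d_\theta=0$; $d_q^x-\cos\theta^*\circ d_\delta+\delta^*\circ\sin\theta^*\circ d_\theta=0$; $d_q^y-\sin\theta^*\circ d_\delta-\delta^*\circ\cos\theta^*\circ d_\theta=0$; $\nabla Q_i(\alpha^* )^\top d_\alpha\ge0$ if $Q(\alpha^* )_i=0$; $d_{\delta,i}\ge0$ if $\delta^*_i=0$; $\nabla Q_i(\alpha^* )^\top d_\alpha=d_{\delta,i}$ for $i\in\mathcal I(x^* )$; $d_{r,i}=0$ for $i\in\mathcal A(x^* )$; and $0\le(\nabla Q_i(\alpha^* )^\top d_\alpha-d_{\delta,i})\perp d_{r,i}\ge0$ for $i\in\mathcal B(x^* )$. *)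

theory Defs
  imports "HOL-Analysis.Analysis"
begin

text \<open>Points x = (u, q^x, q^y, alpha, r, delta, theta); q in (R^2)^m is stored as the pair (q^x, q^y).
  Types: 'd, 'm, 'k are finite index types of the dimensions d, m, k.\<close>

type_synonym ('d,'m,'k) pt =
  "(real^'d) \<times> (real^'m) \<times> (real^'m) \<times> (real^'k) \<times> (real^'m) \<times> (real^'m) \<times> (real^'m)"

text \<open>Operator norm of the map u |-> ((K_x u)_i,(K_y u)_i)_i into (R^2)^m with the Euclidean norm;
  the product norm on real^'m * real^'m is exactly that Euclidean norm.\<close>
definition opnormK :: "real^'d^'m \<Rightarrow> real^'d^'m \<Rightarrow> real" where
  "opnormK Kx Ky = onorm (\<lambda>u. (Kx *v u, Ky *v u))"

definition feasible_TV ::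
  "real^'d^'m \<Rightarrow> real^'d^'m \<Rightarrow> (real^'d \<Rightarrow> real^'d) \<Rightarrow> (real^'k \<Rightarrow> real^'m) \<Rightarrow> ('d,'m,'k) pt \<Rightarrow> bool" where
  "feasible_TV Kx Ky gradD Q x = (case x of (u, qx, qy, \<alpha>, r, \<delta>, \<theta>) \<Rightarrow>
     gradD u + transpose Kx *v qx + transpose Ky *v qy = 0 \<and>
     (\<forall>i. (Kx *v u) $ i = r $ i * cos (\<theta> $ i) \<and> (Ky *v u) $ i = r $ i * sin (\<theta> $ i)) \<and>
     (\<forall>i. qx $ i = \<delta> $ i * cos (\<theta> $ i) \<and> qy $ i = \<delta> $ i * sin (\<theta> $ i)) \<and>
     (\<forall>i. Q \<alpha> $ i \<ge> 0) \<and> (\<forall>i. \<delta> $ i \<ge> 0) \<and>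
     (\<forall>i. r $ i \<ge> 0 \<and> Q \<alpha> $ i - \<delta> $ i \<ge> 0 \<and> r $ i * (Q \<alpha> $ i - \<delta> $ i) = 0))"

definition idxA :: "(real^'k \<Rightarrow> real^'m) \<Rightarrow> ('d,'m,'k) pt \<Rightarrow> 'm set" where
  "idxA Q x = (case x of (u, qx, qy, \<alpha>, r, \<delta>, \<theta>) \<Rightarrow> {i. r $ i = 0 \<and> Q \<alpha> $ i > \<delta> $ i})"

definition idxI :: "(real^'k \<Rightarrow> real^'m) \<Rightarrow> ('d,'m,'k) pt \<Rightarrow> 'm set" where
  "idxI Q x = (case x of (u, qx, qy, \<alpha>, r, \<delta>, \<theta>) \<Rightarrow> {i. r $ i > 0 \<and> Q \<alpha> $ i = \<delta> $ i})"

definition idxB :: "(real^'k \<Rightarrow> real^'m) \<Rightarrow> ('d,'m,'k) pt \<Rightarrow> 'm set" where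
  "idxB Q x = (case x of (u, qx, qy, \<alpha>, r, \<delta>, \<theta>) \<Rightarrow> {i. r $ i = 0 \<and> Q \<alpha> $ i = \<delta> $ i})"

text \<open>M-stationarity system at x for multipliers
  (p, lambda^x, lambda^y, phi^x, phi^y, rho, sigma, gamma, nu).
  gradJ, hessD are gradient of J and Hessian of D; JQ a is the Jacobian of Q at a
  (row i = gradient of Q_i), so transpose (JQ a) is nabla_alpha Q(a)^T.\<close>
definition M_stationary ::
  "real^'d^'m \<Rightarrow> real^'d^'m \<Rightarrow> (real^'d \<Rightarrow> real^'d) \<Rightarrow> (real^'d \<Rightarrow> real^'d^'d) \<Rightarrow>
   (real^'k \<Rightarrow> real^'m) \<Rightarrow> (real^'k \<Rightarrow> real^'k^'m) \<Rightarrow> ('d,'m,'k) pt \<Rightarrow>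
   real^'d \<Rightarrow> real^'m \<Rightarrow> real^'m \<Rightarrow> real^'m \<Rightarrow> real^'m \<Rightarrow> real^'m \<Rightarrow> real^'m \<Rightarrow> real^'m \<Rightarrow> real^'m \<Rightarrow> bool" where
  "M_stationary Kx Ky gradJ hessD Q JQ x p lx ly fx fy \<rho> \<sigma> \<gamma> \<nu> =
   (case x of (u, qx, qy, \<alpha>, r, \<delta>, \<theta>) \<Rightarrow>
     gradJ u - hessD u *v p - transpose Kx *v fx - transpose Ky *v fy = 0 \<and>
     transpose (JQ \<alpha>) *v (\<rho> + \<nu>) = 0 \<and>
     lx = Kx *v p \<and> ly = Ky *v p \<and>
     (\<forall>i. cos (\<theta> $ i) * fx $ i + sin (\<theta> $ i) * fy $ i - \<gamma> $ i = 0) \<and>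
     (\<forall>i. - cos (\<theta> $ i) * lx $ i - sin (\<theta> $ i) * ly $ i - \<sigma> $ i + \<nu> $ i = 0) \<and>
     (\<forall>i. sin (\<theta> $ i) * (- r $ i * fx $ i + \<delta> $ i * lx $ i)
          - cos (\<theta> $ i) * (- r $ i * fy $ i + \<delta> $ i * ly $ i) = 0) \<and>
     (\<forall>i. 0 \<le> Q \<alpha> $ i \<and> 0 \<le> \<rho> $ i \<and> Q \<alpha> $ i * \<rho> $ i = 0) \<and>
     (\<forall>i. 0 \<le> \<delta> $ i \<and> 0 \<le> \<sigma> $ i \<and> \<delta> $ i * \<sigma> $ i = 0) \<and>
     (\<forall>i\<in>idxA Q x. \<nu> $ i = 0) \<and>
     (\<forall>i\<in>idxI Q x. \<gamma> $ i = 0) \<and>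
     (\<forall>i\<in>idxB Q x. \<gamma> $ i * \<nu> $ i = 0 \<or> (\<gamma> $ i \<ge> 0 \<and> \<nu> $ i \<ge> 0)))"

definition S_stationary_point ::
  "real^'d^'m \<Rightarrow> real^'d^'m \<Rightarrow> (real^'d \<Rightarrow> real^'d) \<Rightarrow> (real^'d \<Rightarrow> real^'d^'d) \<Rightarrow>
   (real^'k \<Rightarrow> real^'m) \<Rightarrow> (real^'k \<Rightarrow> real^'k^'m) \<Rightarrow> ('d,'m,'k) pt \<Rightarrow> bool" where
  "S_stationary_point Kx Ky gradJ hessD Q JQ x =
   (\<exists>p lx ly fx fy \<rho> \<sigma> \<gamma> \<nu>. M_stationary Kx Ky gradJ hessD Q JQ x p lx ly fx fy \<rho> \<sigma> \<gamma> \<nu> \<and>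
       (\<forall>i\<in>idxB Q x. \<gamma> $ i \<ge> 0 \<and> \<nu> $ i \<ge> 0))"

definition critical_cone ::
  "real^'d^'m \<Rightarrow> real^'d^'m \<Rightarrow> (real^'d \<Rightarrow> real^'d) \<Rightarrow> (real^'d \<Rightarrow> real^'d^'d) \<Rightarrow>
   (real^'k \<Rightarrow> real^'m) \<Rightarrow> (real^'k \<Rightarrow> real^'k^'m) \<Rightarrow> ('d,'m,'k) pt \<Rightarrow> ('d,'m,'k) pt set" where
  "critical_cone Kx Ky gradJ hessD Q JQ x =
   (case x of (u, qx, qy, \<alpha>, r, \<delta>, \<theta>) \<Rightarrow>
    {(du, dqx, dqy, da, dr, dd, dt).
      gradJ u \<bullet> du \<le> 0 \<and>
      - (hessD u *v du) - transpose Kx *v dqx - transpose Ky *v dqy = 0 \<and>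
      (\<forall>i. - (Kx *v du) $ i + cos (\<theta> $ i) * dr $ i - r $ i * sin (\<theta> $ i) * dt $ i = 0) \<and>
      (\<forall>i. - (Ky *v du) $ i + sin (\<theta> $ i) * dr $ i + r $ i * cos (\<theta> $ i) * dt $ i = 0) \<and>
      (\<forall>i. dqx $ i - cos (\<theta> $ i) * dd $ i + \<delta> $ i * sin (\<theta> $ i) * dt $ i = 0) \<and>
      (\<forall>i. dqy $ i - sin (\<theta> $ i) * dd $ i - \<delta> $ i * cos (\<theta> $ i) * dt $ i = 0) \<and>
      (\<forall>i. Q \<alpha> $ i = 0 \<longrightarrow> (JQ \<alpha> *v da) $ i \<ge> 0) \<and>
      (\<forall>i. \<delta> $ i = 0 \<longrightarrow> dd $ i \<ge> 0) \<and>
      (\<forall>i\<in>idxI Q x. (JQ \<alpha> *v da) $ i = dd $ i) \<and>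
      (\<forall>i\<in>idxA Q x. dr $ i = 0) \<and>
      (\<forall>i\<in>idxB Q x. 0 \<le> (JQ \<alpha> *v da) $ i - dd $ i \<and> 0 \<le> dr $ i \<and>
                      ((JQ \<alpha> *v da) $ i - dd $ i) * dr $ i = 0)})"

definition strict_local_min ::
  "('d::finite,'m::finite,'k::finite) pt set \<Rightarrow> (real^'d \<Rightarrow> real) \<Rightarrow> ('d,'m,'k) pt \<Rightarrow> bool" where
  "strict_local_min F J x = (x \<in> F \<and> (\<exists>\<epsilon>>0. \<forall>y\<in>F. y \<noteq> x \<and> dist y x < \<epsilon> \<longrightarrow> J (fst x) < J (fst y)))"

end

theory Submission
  imports Defs
begin

lemma seq_deriv1:
  fixes f :: "'a::real_normed_vector \<Rightarrow> 'b::real_normed_vector"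
  assumes fd: "(f has_derivative f') (at x0)"
    and X: "X \<longlonglongrightarrow> x0"
    and D: "(\<lambda>n. (X n - x0) /\<^sub>R t n) \<longlonglongrightarrow> d"
    and tpos: "\<And>n. t n > 0"
  shows "(\<lambda>n. (f (X n) - f x0) /\<^sub>R t n) \<longlonglongrightarrow> f' d"
proof -
  have bl: "bounded_linear f'" using fd by (rule has_derivative_bounded_linear)
  have eq: "(f (X n) - f x0) /\<^sub>R t n = f' ((X n - x0) /\<^sub>R t n) + (f (X n) - f x0 - f' (X n - x0)) /\<^sub>R t n" for n
    using bl by (simp add: linear_simps bounded_linear.linear algebra_simps)
  have l1: "(\<lambda>n. f' ((X n - x0) /\<^sub>R t n)) \<longlonglongrightarrow> f' d"
    using bounded_linear.tendsto[OF bl D] .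
  have nD: "(\<lambda>n. norm ((X n - x0) /\<^sub>R t n)) \<longlonglongrightarrow> norm d"
    using tendsto_norm[OF D] .
  have l2: "(\<lambda>n. (f (X n) - f x0 - f' (X n - x0)) /\<^sub>R t n) \<longlonglongrightarrow> 0"
  proof (rule LIMSEQ_I)
    fix e :: real assume e: "e > 0"
    define e' where "e' = e / (norm d + 1)"
    have e': "e' > 0" using e unfolding e'_def by (intro divide_pos_pos) (auto intro: add_nonneg_pos)
    obtain \<delta> where \<delta>: "\<delta> > 0" and H: "\<And>y. norm (y - x0) < \<delta> \<Longrightarrow> norm (f y - f x0 - f' (y - x0)) \<le> e' * norm (y - x0)"
      using fd e' unfolding has_derivative_at_alt by blast
    obtain N1 where N1: "\<And>n. n \<ge> N1 \<Longrightarrow> norm (X n - x0) < \<delta>"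
      using LIMSEQ_D[OF X \<delta>] by (auto simp: dist_norm)
    obtain N2 where N2: "\<And>n. n \<ge> N2 \<Longrightarrow> norm (norm ((X n - x0) /\<^sub>R t n) - norm d) < 1/2"
      using LIMSEQ_D[OF nD, of "1/2"] by (auto simp: dist_norm)
    show "\<exists>N. \<forall>n\<ge>N. norm ((f (X n) - f x0 - f' (X n - x0)) /\<^sub>R t n - 0) < e"
    proof (intro exI allI impI)
      fix n assume n: "n \<ge> max N1 N2"
      have a: "norm (f (X n) - f x0 - f' (X n - x0)) \<le> e' * norm (X n - x0)" using H N1 n by auto
      have b0: "norm ((X n - x0) /\<^sub>R t n) = norm (X n - x0) / t n" using tpos[of n] by (simp add: divide_inverse_commute)
      have b: "norm (X n - x0) / t n < norm d + 1" using N2[of n] n abs_ge_self[of "norm (X n - x0) / t n - norm d"] unfolding b0 real_norm_def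
        by simp
      have "norm ((f (X n) - f x0 - f' (X n - x0)) /\<^sub>R t n) = norm (f (X n) - f x0 - f' (X n - x0)) / t n"
        using tpos[of n] by (simp add: divide_inverse_commute)
      also have "\<dots> \<le> e' * (norm (X n - x0) / t n)"
        using a tpos[of n] by (simp add: divide_right_mono)
      also have "\<dots> < e' * (norm d + 1)" using mult_strict_left_mono[OF b e'] by simp
      also have "\<dots> = e" proof - have "norm d + 1 \<noteq> 0" by (smt (verit) norm_ge_zero) then show ?thesis using e'_def by simp qed
      finally show "norm ((f (X n) - f x0 - f' (X n - x0)) /\<^sub>R t n - 0) < e" by simp
    qed
  qed
  show ?thesis unfolding eq using tendsto_add[OF l1 l2] by simp
qed

lemma line_deriv:
  fixes f :: "'a::real_normed_vector \<Rightarrow> real"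
  assumes d1: "\<And>x. (f has_derivative Fd x) (at x)"
  shows "((\<lambda>s. f (a + s *\<^sub>R v)) has_real_derivative Fd (a + s *\<^sub>R v) v) (at s)"
proof -
  have i: "((\<lambda>s. a + s *\<^sub>R v) has_derivative (\<lambda>s'. s' *\<^sub>R v)) (at s)"
    by (auto intro!: derivative_eq_intros)
  have c: "((\<lambda>s. f (a + s *\<^sub>R v)) has_derivative (\<lambda>s'. Fd (a + s *\<^sub>R v) (s' *\<^sub>R v))) (at s)"
    using has_derivative_compose[OF i d1] .
  have bl: "bounded_linear (Fd (a + s *\<^sub>R v))" using d1 by (rule has_derivative_bounded_linear)
  show ?thesis
    apply (rule has_derivative_imp_has_field_derivative[OF c])
    using bl by (simp add: linear_simps bounded_linear.linear)
qed

lemma taylor2_point: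
  fixes f :: "'a::real_normed_vector \<Rightarrow> real"
  assumes d1: "\<And>x. (f has_derivative Fa x) (at x)"
    and d2: "\<And>x h. ((\<lambda>y. Fa y h) has_derivative Fb x h) (at x)"
  shows "\<exists>\<xi>. 0 \<le> \<xi> \<and> \<xi> \<le> 1 \<and> f (x0 + h) = f x0 + Fa x0 h + Fb (x0 + \<xi> *\<^sub>R h) h h / 2"
proof -
  define diff where "diff = (\<lambda>m::nat. if m = 0 then (\<lambda>s. f (x0 + s *\<^sub>R h))
     else if m = 1 then (\<lambda>s. Fa (x0 + s *\<^sub>R h) h) else (\<lambda>s. Fb (x0 + s *\<^sub>R h) h h))"
  have D: "\<forall>m t. m < 2 \<and> 0 \<le> t \<and> t \<le> 1 \<longrightarrow> DERIV (diff m) t :> diff (Suc m) t"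
  proof (intro allI impI)
    fix m :: nat and t :: real assume "m < 2 \<and> 0 \<le> t \<and> t \<le> 1"
    then have "m = 0 \<or> m = 1" by auto
    then show "DERIV (diff m) t :> diff (Suc m) t"
    proof
      assume "m = 0" then show ?thesis unfolding diff_def using line_deriv[OF d1] by simp
    next
      assume "m = 1" then show ?thesis unfolding diff_def
        using line_deriv[where f="\<lambda>y. Fa y h" and Fd="\<lambda>x. Fb x h", OF d2] by simp
    qed
  qed
  obtain t where t: "0 < t" "t < 1"
    and eq: "diff 0 1 = (\<Sum>m<2. diff m 0 / fact m * 1 ^ m) + diff 2 t / fact 2 * 1 ^ 2"
    using Maclaurin[of 1 2 diff "diff 0", OF _ _ _ D] by auto
  have "f (x0 + h) = f x0 + Fa x0 h + Fb (x0 + t *\<^sub>R h) h h / 2"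
    using eq unfolding diff_def by (simp add: numeral_2_eq_2)
  then show ?thesis using t by (intro exI[of _ t]) auto
qed

lemma seq_deriv2:
  fixes f :: "'a::real_normed_vector \<Rightarrow> real"
  assumes d1: "\<And>x. (f has_derivative Fa x) (at x)"
    and d2: "\<And>x h. ((\<lambda>y. Fa y h) has_derivative Fb x h) (at x)"
    and hom: "\<And>y c h. Fb y (c *\<^sub>R h) (c *\<^sub>R h) = c^2 * Fb y h h"
    and cont: "isCont (\<lambda>z. Fb (fst z) (snd z) (snd z)) (x0, d)"
    and X: "X \<longlonglongrightarrow> x0"
    and D: "(\<lambda>n. (X n - x0) /\<^sub>R t n) \<longlonglongrightarrow> d"
    and tpos: "\<And>n. t n > 0"
  shows "(\<lambda>n. (f (X n) - f x0 - Fa x0 (X n - x0)) / (t n)^2) \<longlonglongrightarrow> Fb x0 d d / 2"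
proof -
  have "\<forall>n. \<exists>\<xi>. 0 \<le> \<xi> \<and> \<xi> \<le> 1 \<and> f (x0 + (X n - x0)) = f x0 + Fa x0 (X n - x0) + Fb (x0 + \<xi> *\<^sub>R (X n - x0)) (X n - x0) (X n - x0) / 2"
    using taylor2_point[OF d1 d2] by blast
  then obtain \<xi> where \<xi>: "\<And>n. 0 \<le> \<xi> n" "\<And>n. \<xi> n \<le> 1"
    and tay: "\<And>n. f (X n) = f x0 + Fa x0 (X n - x0) + Fb (x0 + \<xi> n *\<^sub>R (X n - x0)) (X n - x0) (X n - x0) / 2"
    by (metis add.commute diff_add_cancel)
  have eq: "(f (X n) - f x0 - Fa x0 (X n - x0)) / (t n)^2 =
     Fb (x0 + \<xi> n *\<^sub>R (X n - x0)) ((X n - x0) /\<^sub>R t n) ((X n - x0) /\<^sub>R t n) / 2" for n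
  proof -
    have "Fb (x0 + \<xi> n *\<^sub>R (X n - x0)) ((X n - x0) /\<^sub>R t n) ((X n - x0) /\<^sub>R t n)
       = (inverse (t n))^2 * Fb (x0 + \<xi> n *\<^sub>R (X n - x0)) (X n - x0) (X n - x0)"
      using hom by simp
    then show ?thesis using tay[of n] tpos[of n] by (simp add: field_simps power2_eq_square)
  qed
  have X0: "(\<lambda>n. X n - x0) \<longlonglongrightarrow> 0" using X by (simp add: LIM_zero)
  have Y: "(\<lambda>n. x0 + \<xi> n *\<^sub>R (X n - x0)) \<longlonglongrightarrow> x0"
  proof -
    have "(\<lambda>n. \<xi> n *\<^sub>R (X n - x0)) \<longlonglongrightarrow> 0"
    proof (rule tendsto_norm_zero_cancel, rule tendsto_sandwich[where f="\<lambda>n. 0" and h="\<lambda>n. norm (X n - x0)"])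
      show "\<forall>\<^sub>F n in sequentially. 0 \<le> norm (\<xi> n *\<^sub>R (X n - x0))" by simp
      show "\<forall>\<^sub>F n in sequentially. norm (\<xi> n *\<^sub>R (X n - x0)) \<le> norm (X n - x0)"
        using \<xi> by (auto intro!: always_eventually mult_left_le_one_le)
      show "(\<lambda>n. 0::real) \<longlonglongrightarrow> 0" by simp
      show "(\<lambda>n. norm (X n - x0)) \<longlonglongrightarrow> 0" using tendsto_norm_zero[OF X0] .
    qed
    then show ?thesis using tendsto_add[OF tendsto_const[of x0]] by fastforce
  qed
  have "(\<lambda>n. (\<lambda>z. Fb (fst z) (snd z) (snd z)) (x0 + \<xi> n *\<^sub>R (X n - x0), (X n - x0) /\<^sub>R t n)) \<longlonglongrightarrow> Fb x0 d d"
    using isCont_tendsto_compose[OF cont tendsto_Pair[OF Y D]] by simp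
  then show ?thesis unfolding eq by (auto intro!: tendsto_divide)
qed

lemma schwarz_aux:
  fixes f :: "'a::real_normed_vector \<Rightarrow> real"
  assumes d1: "\<And>x. (f has_derivative Fa x) (at x)"
    and d2: "\<And>x h. ((\<lambda>y. Fa y h) has_derivative Fb x h) (at x)"
    and t: "t > 0"
  shows "\<exists>z. norm (z - x0) \<le> t * (norm v + norm w) \<and>
    f (x0 + t *\<^sub>R w + t *\<^sub>R v) - f (x0 + t *\<^sub>R v) - f (x0 + t *\<^sub>R w) + f x0 = t^2 * Fb z v w"
proof -
  define \<psi> where "\<psi> = (\<lambda>s. f (x0 + t *\<^sub>R w + s *\<^sub>R v) - f (x0 + s *\<^sub>R v))"
  have "\<exists>\<xi>. 0 < \<xi> \<and> \<xi> < t \<and> \<psi> t - \<psi> 0 = (t - 0) * (Fa (x0 + t *\<^sub>R w + \<xi> *\<^sub>R v) v - Fa (x0 + \<xi> *\<^sub>R v) v)"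
    unfolding \<psi>_def
    by (rule MVT2[OF t]) (intro derivative_intros line_deriv[OF d1])
  then obtain \<xi> where \<xi>: "0 < \<xi>" "\<xi> < t"
    and e1: "\<psi> t - \<psi> 0 = t * (Fa (x0 + t *\<^sub>R w + \<xi> *\<^sub>R v) v - Fa (x0 + \<xi> *\<^sub>R v) v)" by auto
  have "\<exists>\<eta>. 0 < \<eta> \<and> \<eta> < t \<and> Fa ((x0 + \<xi> *\<^sub>R v) + t *\<^sub>R w) v - Fa ((x0 + \<xi> *\<^sub>R v) + 0 *\<^sub>R w) v
       = (t - 0) * Fb ((x0 + \<xi> *\<^sub>R v) + \<eta> *\<^sub>R w) v w"
    by (rule MVT2[OF t]) (rule line_deriv[where f="\<lambda>y. Fa y v" and Fd="\<lambda>x. Fb x v", OF d2])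
  then obtain \<eta> where \<eta>: "0 < \<eta>" "\<eta> < t"
    and e2: "Fa ((x0 + \<xi> *\<^sub>R v) + t *\<^sub>R w) v - Fa (x0 + \<xi> *\<^sub>R v) v = t * Fb ((x0 + \<xi> *\<^sub>R v) + \<eta> *\<^sub>R w) v w"
    by auto
  define z where "z = (x0 + \<xi> *\<^sub>R v) + \<eta> *\<^sub>R w"
  have "norm (z - x0) \<le> norm (\<xi> *\<^sub>R v) + norm (\<eta> *\<^sub>R w)" unfolding z_def
    by (metis add_diff_cancel_left' add.assoc norm_triangle_ineq)
  also have "\<dots> \<le> t * norm v + t * norm w" using \<xi> \<eta>
    by (intro add_mono) (auto intro: mult_right_mono)
  finally have nz: "norm (z - x0) \<le> t * (norm v + norm w)" by (simp add: algebra_simps)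
  have "f (x0 + t *\<^sub>R w + t *\<^sub>R v) - f (x0 + t *\<^sub>R v) - f (x0 + t *\<^sub>R w) + f x0 = \<psi> t - \<psi> 0"
    unfolding \<psi>_def by simp
  also have "\<dots> = t^2 * Fb z v w" using e1 e2 unfolding z_def by (simp add: algebra_simps power2_eq_square)
  finally show ?thesis using nz by blast
qed

lemma schwarz:
  fixes f :: "'a::real_normed_vector \<Rightarrow> real"
  assumes d1: "\<And>x. (f has_derivative Fa x) (at x)"
    and d2: "\<And>x h. ((\<lambda>y. Fa y h) has_derivative Fb x h) (at x)"
    and cont: "\<And>h k. isCont (\<lambda>y. Fb y h k) x0"
  shows "Fb x0 v w = Fb x0 w v"
proof -
  define t where "t = (\<lambda>n::nat. 1 / (real n + 1))"
  have tpos: "t n > 0" for n unfolding t_def by simp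
  have t0: "t \<longlonglongrightarrow> 0" unfolding t_def using LIMSEQ_inverse_real_of_nat by (simp add: inverse_eq_divide add.commute)
  have "\<forall>n. \<exists>z. norm (z - x0) \<le> t n * (norm v + norm w) \<and>
    f (x0 + t n *\<^sub>R w + t n *\<^sub>R v) - f (x0 + t n *\<^sub>R v) - f (x0 + t n *\<^sub>R w) + f x0 = (t n)^2 * Fb z v w"
    using schwarz_aux[OF d1 d2 tpos] by blast
  then obtain z where z1: "\<And>n. norm (z n - x0) \<le> t n * (norm v + norm w)"
    and z2: "\<And>n. f (x0 + t n *\<^sub>R w + t n *\<^sub>R v) - f (x0 + t n *\<^sub>R v) - f (x0 + t n *\<^sub>R w) + f x0 = (t n)^2 * Fb (z n) v w"
    by metis
  have "\<forall>n. \<exists>z. norm (z - x0) \<le> t n * (norm w + norm v) \<and>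
    f (x0 + t n *\<^sub>R v + t n *\<^sub>R w) - f (x0 + t n *\<^sub>R w) - f (x0 + t n *\<^sub>R v) + f x0 = (t n)^2 * Fb z w v"
    using schwarz_aux[OF d1 d2 tpos] by blast
  then obtain z' where z1': "\<And>n. norm (z' n - x0) \<le> t n * (norm w + norm v)"
    and z2': "\<And>n. f (x0 + t n *\<^sub>R v + t n *\<^sub>R w) - f (x0 + t n *\<^sub>R w) - f (x0 + t n *\<^sub>R v) + f x0 = (t n)^2 * Fb (z' n) w v"
    by metis
  have eqn: "Fb (z n) v w = Fb (z' n) w v" for n
  proof -
    have "(t n)^2 * Fb (z n) v w = (t n)^2 * Fb (z' n) w v"
      using z2[of n] z2'[of n] by (simp add: algebra_simps)
    then show ?thesis using tpos[of n] by simp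
  qed
  have conv: "(\<lambda>n. y n) \<longlonglongrightarrow> x0" if "\<And>n. norm (y n - x0) \<le> t n * c" for y c
  proof -
    have "(\<lambda>n. y n - x0) \<longlonglongrightarrow> 0"
    proof (rule tendsto_norm_zero_cancel, rule tendsto_sandwich[where f="\<lambda>n. 0" and h="\<lambda>n. t n * c"])
      show "\<forall>\<^sub>F n in sequentially. 0 \<le> norm (y n - x0)" by simp
      show "\<forall>\<^sub>F n in sequentially. norm (y n - x0) \<le> t n * c" using that by simp
      show "(\<lambda>n. 0::real) \<longlonglongrightarrow> 0" by simp
      show "(\<lambda>n. t n * c) \<longlonglongrightarrow> 0" using tendsto_mult[OF t0 tendsto_const[of c]] by simp
    qed
    then show ?thesis by (simp add: LIM_zero_iff)
  qed
  have l1: "(\<lambda>n. Fb (z n) v w) \<longlonglongrightarrow> Fb x0 v w"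
    using isCont_tendsto_compose[OF cont conv[OF z1]] .
  have l2: "(\<lambda>n. Fb (z' n) w v) \<longlonglongrightarrow> Fb x0 w v"
    using isCont_tendsto_compose[OF cont conv[OF z1']] .
  show ?thesis using LIMSEQ_unique[OF l1] l2 unfolding eqn by simp
qed


lemma trig_seq:
  fixes a b t :: "nat \<Rightarrow> real"
  assumes A: "a \<longlonglongrightarrow> a0" and B: "b \<longlonglongrightarrow> b0"
    and DA: "(\<lambda>n. (a n - a0) / t n) \<longlonglongrightarrow> da" and DB: "(\<lambda>n. (b n - b0) / t n) \<longlonglongrightarrow> db"
    and tpos: "\<And>n. t n > 0"
  shows "(\<lambda>n. (a n * cos (b n) - a0 * cos b0) / t n) \<longlonglongrightarrow> cos b0 * da - a0 * sin b0 * db"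
    and "(\<lambda>n. (a n * sin (b n) - a0 * sin b0) / t n) \<longlonglongrightarrow> sin b0 * da + a0 * cos b0 * db"
proof -
  have X: "(\<lambda>n. (a n, b n)) \<longlonglongrightarrow> (a0, b0)" using tendsto_Pair[OF A B] .
  have D: "(\<lambda>n. ((a n, b n) - (a0, b0)) /\<^sub>R t n) \<longlonglongrightarrow> (da, db)"
    using tendsto_Pair[OF DA DB] by (simp add: divide_inverse_commute)
  have d1: "((\<lambda>z. fst z * cos (snd z)) has_derivative (\<lambda>h. fst h * cos b0 - a0 * sin b0 * snd h)) (at (a0, b0))"
    by (auto intro!: derivative_eq_intros simp: algebra_simps)
  have d2: "((\<lambda>z. fst z * sin (snd z)) has_derivative (\<lambda>h. fst h * sin b0 + a0 * cos b0 * snd h)) (at (a0, b0))"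
    by (auto intro!: derivative_eq_intros simp: algebra_simps)
  show "(\<lambda>n. (a n * cos (b n) - a0 * cos b0) / t n) \<longlonglongrightarrow> cos b0 * da - a0 * sin b0 * db"
    using seq_deriv1[OF d1 X D tpos] by (simp add: divide_inverse_commute algebra_simps)
  show "(\<lambda>n. (a n * sin (b n) - a0 * sin b0) / t n) \<longlonglongrightarrow> sin b0 * da + a0 * cos b0 * db"
    using seq_deriv1[OF d2 X D tpos] by (simp add: divide_inverse_commute algebra_simps)
qed

lemma vcomp: "((x - y) /\<^sub>R c) $ i = (x $ i - y $ i) / (c::real)" for x y :: "real^'n"
  by (simp add: divide_inverse_commute right_diff_distrib)

lemma lim_comp: "(\<lambda>n. (X n - x0) /\<^sub>R t n) \<longlonglongrightarrow> d \<Longrightarrow> (\<lambda>n. (X n $ i - x0 $ i) / t n) \<longlonglongrightarrow> d $ i"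
  for X :: "nat \<Rightarrow> real^'n"
  using tendsto_vec_nth[of "\<lambda>n. (X n - x0) /\<^sub>R t n" d sequentially i] by (simp add: vcomp divide_inverse_commute)

lemma isCont_mv_inner:
  fixes A :: "'a::t2_space \<Rightarrow> real^'n^'m"
  assumes "isCont A x" "isCont v x" "isCont w x"
  shows "isCont (\<lambda>z. (A z *v v z) \<bullet> w z) x"
proof -
  have eq: "(\<lambda>z. (A z *v v z) \<bullet> w z) = (\<lambda>z. \<Sum>i\<in>UNIV. (\<Sum>j\<in>UNIV. A z $ i $ j * v z $ j) * w z $ i)"
    by (simp add: inner_vec_def matrix_vector_mult_def)
  show ?thesis unfolding eq by (intro continuous_intros isCont_vec_nth assms)
qed

definition trigf :: "real \<Rightarrow> real \<Rightarrow> real \<Rightarrow> real \<Rightarrow> real \<times> real \<times> real \<Rightarrow> real" where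
  "trigf A B C D z = fst z * (A * cos (snd (snd z)) + B * sin (snd (snd z)))
     - fst (snd z) * (C * cos (snd (snd z)) + D * sin (snd (snd z)))"

definition trigf1 :: "real \<Rightarrow> real \<Rightarrow> real \<Rightarrow> real \<Rightarrow> real \<times> real \<times> real \<Rightarrow> real \<times> real \<times> real \<Rightarrow> real" where
  "trigf1 A B C D z h = fst h * (A * cos (snd (snd z)) + B * sin (snd (snd z)))
     - fst (snd h) * (C * cos (snd (snd z)) + D * sin (snd (snd z)))
     + snd (snd h) * (fst z * (B * cos (snd (snd z)) - A * sin (snd (snd z)))
                     - fst (snd z) * (D * cos (snd (snd z)) - C * sin (snd (snd z))))"

definition trigf2 :: "real \<Rightarrow> real \<Rightarrow> real \<Rightarrow> real \<Rightarrow> real \<times> real \<times> real \<Rightarrow> real \<times> real \<times> real \<Rightarrow> real \<times> real \<times> real \<Rightarrow> real" where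
  "trigf2 A B C D z h k = fst h * snd (snd k) * (B * cos (snd (snd z)) - A * sin (snd (snd z)))
     - fst (snd h) * snd (snd k) * (D * cos (snd (snd z)) - C * sin (snd (snd z)))
     + snd (snd h) * (fst k * (B * cos (snd (snd z)) - A * sin (snd (snd z)))
                     - fst (snd k) * (D * cos (snd (snd z)) - C * sin (snd (snd z)))
                     - snd (snd k) * (fst z * (A * cos (snd (snd z)) + B * sin (snd (snd z)))
                                     - fst (snd z) * (C * cos (snd (snd z)) + D * sin (snd (snd z)))))"

lemma trigf_d1: "(trigf A B C D has_derivative trigf1 A B C D z) (at z)"
  unfolding trigf_def trigf1_def
  by (auto intro!: derivative_eq_intros simp: algebra_simps)

lemma trigf_d2: "((\<lambda>y. trigf1 A B C D y h) has_derivative trigf2 A B C D z h) (at z)"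
  unfolding trigf1_def trigf2_def
  by (auto intro!: derivative_eq_intros simp: algebra_simps)

lemma trig2:
  assumes X: "X \<longlonglongrightarrow> x0" and D: "(\<lambda>n. (X n - x0) /\<^sub>R t n) \<longlonglongrightarrow> d" and tpos: "\<And>n. t n > 0"
  shows "(\<lambda>n. (trigf A B C D (X n) - trigf A B C D x0 - trigf1 A B C D x0 (X n - x0)) / (t n)^2)
     \<longlonglongrightarrow> trigf2 A B C D x0 d d / 2"
proof (rule seq_deriv2[OF trigf_d1 trigf_d2 _ _ X D tpos])
  show "trigf2 A B C D y (c *\<^sub>R h) (c *\<^sub>R h) = c\<^sup>2 * trigf2 A B C D y h h" for y c h
    unfolding trigf2_def by (simp add: algebra_simps power2_eq_square)
  show "isCont (\<lambda>z. trigf2 A B C D (fst z) (snd z) (snd z)) (x0, d)"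
    unfolding trigf2_def by (intro continuous_intros)
qed


lemma smv: "(c *\<^sub>R A) *v x = c *\<^sub>R (A *v x)" for A :: "real^'n^'m"
  by (simp add: matrix_vector_mult_def vec_eq_iff sum_distrib_left algebra_simps)

lemma tdot: "(transpose A *v x) \<bullet> y = x \<bullet> (A *v y)" for A :: "real^'n^'m"
  by (simp add: dot_lmul_matrix)

lemma young3: "2*a*b*c \<ge> -(b^2) - a^2*c^2" for a b c :: real
proof -
  have "0 \<le> (b + a*c)^2" by simp
  then show ?thesis by (simp add: power2_eq_square algebra_simps)
qed
lemma trig_cs1: "(B * cos x - A * sin x)^2 \<le> A^2 + B^2" for A B x :: real
proof -
  have "(B * cos x - A * sin x)^2 + (A * cos x + B * sin x)^2 = A^2 + B^2"
    using sin_cos_squared_add[of x] by algebra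
  moreover have "0 \<le> (A * cos x + B * sin x)^2" by simp
  ultimately show ?thesis by linarith
qed
lemma trig_cs2: "(a * cos x + b * sin x)^2 \<le> a^2 + b^2" for a b x :: real
proof -
  have "(a * cos x + b * sin x)^2 + (b * cos x - a * sin x)^2 = a^2 + b^2"
    using sin_cos_squared_add[of x] by algebra
  moreover have "0 \<le> (b * cos x - a * sin x)^2" by simp
  ultimately show ?thesis by linarith
qed
lemma sum_if2:
  fixes a b :: "'i::finite \<Rightarrow> real"
  assumes "S \<inter> S' = {}"
  shows "(\<Sum>i\<in>UNIV. if i \<in> S then a i else if i \<in> S' then b i else 0) = sum a S + sum b S'"
proof -
  have "(\<Sum>i\<in>UNIV. if i \<in> S then a i else if i \<in> S' then b i else 0)
      = (\<Sum>i\<in>UNIV. (if i \<in> S then a i else 0) + (if i \<in> S' then b i else 0))"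
    using assms by (intro sum.cong) auto
  also have "\<dots> = (\<Sum>i\<in>UNIV. if i \<in> S then a i else 0) + (\<Sum>i\<in>UNIV. if i \<in> S' then b i else 0)"
    by (rule sum.distrib)
  also have "\<dots> = sum a S + sum b S'"
    using sum.inter_restrict[of UNIV a S, symmetric] sum.inter_restrict[of UNIV b S', symmetric] by simp
  finally show ?thesis .
qed

lemma bl_mv: "bounded_linear (\<lambda>A::real^'n^'m. A *v h)"
  unfolding linear_conv_bounded_linear[symmetric]
  by (auto intro!: linearI simp: matrix_vector_mult_def vec_eq_iff sum.distrib algebra_simps sum_distrib_left)

theorem theorem3p5:
  fixes Kx Ky :: "real^'d^'m"
    and D :: "real^'d \<Rightarrow> real" and gradD :: "real^'d \<Rightarrow> real^'d"
    and hessD :: "real^'d \<Rightarrow> real^'d^'d" and D3 :: "real^'d \<Rightarrow> real^'d \<Rightarrow> real^'d^'d"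
    and J :: "real^'d \<Rightarrow> real" and gradJ :: "real^'d \<Rightarrow> real^'d" and hessJ :: "real^'d \<Rightarrow> real^'d^'d"
    and Q :: "real^'k \<Rightarrow> real^'m" and JQ :: "real^'k \<Rightarrow> real^'k^'m"
    and HQ :: "real^'k \<Rightarrow> 'm \<Rightarrow> real^'k^'k"
    and xs :: "('d,'m,'k) pt"
  assumes D_convex: "convex_on UNIV D"
    and D_d1: "\<And>u. (D has_derivative (\<lambda>h. gradD u \<bullet> h)) (at u)"
    and D_d2: "\<And>u. (gradD has_derivative (\<lambda>h. hessD u *v h)) (at u)"
    and D_d3: "\<And>u. (hessD has_derivative D3 u) (at u)"
    and D_C3: "\<And>h. continuous_on UNIV (\<lambda>u. D3 u h)"
    and J_d1: "\<And>u. (J has_derivative (\<lambda>h. gradJ u \<bullet> h)) (at u)"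
    and J_d2: "\<And>u. (gradJ has_derivative (\<lambda>h. hessJ u *v h)) (at u)"
    and J_C2: "continuous_on UNIV hessJ"
    and Q_d1: "\<And>a. (Q has_derivative (\<lambda>h. JQ a *v h)) (at a)"
    and Q_d2: "\<And>a i. ((\<lambda>b. JQ b $ i) has_derivative (\<lambda>h. HQ a i *v h)) (at a)"
    and Q_C2: "\<And>i. continuous_on UNIV (\<lambda>a. HQ a i)"
    and feas: "feasible_TV Kx Ky gradD Q xs"
    and full_rank: "rank (transpose (JQ (fst (snd (snd (snd xs)))))) = min CARD('k) CARD('m)"
    and B_cap: "idxB Q xs \<inter> {i. Q (fst (snd (snd (snd xs)))) $ i = 0} = {}"
    and S_stat: "S_stationary_point Kx Ky gradJ hessD Q JQ xs"
    and SOSC: "\<And>p lx ly fx fy \<rho> \<sigma> \<gamma> \<nu> du dqx dqy da dr dd dt.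
       M_stationary Kx Ky gradJ hessD Q JQ xs p lx ly fx fy \<rho> \<sigma> \<gamma> \<nu> \<Longrightarrow>
       (du, dqx, dqy, da, dr, dd, dt) \<in> critical_cone Kx Ky gradJ hessD Q JQ xs \<Longrightarrow>
       (du, dqx, dqy, da, dr, dd, dt) \<noteq> 0 \<Longrightarrow>
       (case xs of (u, qx, qy, \<alpha>, r, \<delta>, \<theta>) \<Rightarrow>
          (hessJ u *v du) \<bullet> du
          - (D3 u p *v du) \<bullet> du
          - (\<Sum>i\<in>idxI Q xs \<union> idxB Q xs. (fx $ i)\<^sup>2 + (fy $ i)\<^sup>2) * (opnormK Kx Ky)\<^sup>2 * (norm du)\<^sup>2
          - (\<Sum>i\<in>UNIV. (\<rho> $ i + \<nu> $ i) * (da \<bullet> (HQ \<alpha> i *v da)))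
          - (\<Sum>i\<in>idxI Q xs. ((Kx *v p) $ i)\<^sup>2 + ((Ky *v p) $ i)\<^sup>2)
              * (\<Sum>i\<in>idxI Q xs. ((JQ \<alpha> *v da) $ i)\<^sup>2)
          + (\<Sum>i\<in>idxI Q xs. (\<delta> $ i * \<nu> $ i - 2) * (dt $ i)\<^sup>2)
          + (\<Sum>i\<in>idxB Q xs. (\<delta> $ i * \<nu> $ i - 1) * (dt $ i)\<^sup>2)) > 0"
  shows "strict_local_min {x. feasible_TV Kx Ky gradD Q x} J xs"
proof -
  obtain u0 qx0 qy0 a0 r0 dl0 th0 where xs: "xs = (u0, qx0, qy0, a0, r0, dl0, th0)"
    by (metis prod.collapse)
  obtain p lx ly fx fy \<rho> \<sigma> \<gamma> \<nu> where MS: "M_stationary Kx Ky gradJ hessD Q JQ xs p lx ly fx fy \<rho> \<sigma> \<gamma> \<nu>"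
    and SB: "\<forall>i\<in>idxB Q xs. \<gamma> $ i \<ge> 0 \<and> \<nu> $ i \<ge> 0"
    using S_stat unfolding S_stationary_point_def by blast
  have IA: "idxA Q xs = {i. r0 $ i = 0 \<and> Q a0 $ i > dl0 $ i}" by (simp add: idxA_def xs)
  have II: "idxI Q xs = {i. r0 $ i > 0 \<and> Q a0 $ i = dl0 $ i}" by (simp add: idxI_def xs)
  have IB: "idxB Q xs = {i. r0 $ i = 0 \<and> Q a0 $ i = dl0 $ i}" by (simp add: idxB_def xs)
  have Fa: "gradD u0 + transpose Kx *v qx0 + transpose Ky *v qy0 = 0"
    and Fb: "\<And>i. (Kx *v u0) $ i = r0 $ i * cos (th0 $ i) \<and> (Ky *v u0) $ i = r0 $ i * sin (th0 $ i)"
    and F3: "\<And>i. qx0 $ i = dl0 $ i * cos (th0 $ i) \<and> qy0 $ i = dl0 $ i * sin (th0 $ i)"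
    and F4: "\<And>i. Q a0 $ i \<ge> 0" and F5: "\<And>i. dl0 $ i \<ge> 0"
    and F6: "\<And>i. r0 $ i \<ge> 0 \<and> Q a0 $ i - dl0 $ i \<ge> 0 \<and> r0 $ i * (Q a0 $ i - dl0 $ i) = 0"
    using feas unfolding feasible_TV_def xs by auto
  have M1: "gradJ u0 - hessD u0 *v p - transpose Kx *v fx - transpose Ky *v fy = 0"
    and M2: "transpose (JQ a0) *v (\<rho> + \<nu>) = 0"
    and M3: "lx = Kx *v p" "ly = Ky *v p"
    and M4: "\<And>i. cos (th0 $ i) * fx $ i + sin (th0 $ i) * fy $ i - \<gamma> $ i = 0"
    and M5: "\<And>i. - cos (th0 $ i) * lx $ i - sin (th0 $ i) * ly $ i - \<sigma> $ i + \<nu> $ i = 0"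
    and M6: "\<And>i. sin (th0 $ i) * (- r0 $ i * fx $ i + dl0 $ i * lx $ i)
          - cos (th0 $ i) * (- r0 $ i * fy $ i + dl0 $ i * ly $ i) = 0"
    and M7: "\<And>i. 0 \<le> \<rho> $ i \<and> Q a0 $ i * \<rho> $ i = 0"
    and M8: "\<And>i. 0 \<le> \<sigma> $ i \<and> dl0 $ i * \<sigma> $ i = 0"
    and M9: "\<And>i. r0 $ i = 0 \<Longrightarrow> Q a0 $ i > dl0 $ i \<Longrightarrow> \<nu> $ i = 0"
    and M10: "\<And>i. r0 $ i > 0 \<Longrightarrow> Q a0 $ i = dl0 $ i \<Longrightarrow> \<gamma> $ i = 0"
    and M11: "\<And>i. r0 $ i = 0 \<Longrightarrow> Q a0 $ i = dl0 $ i \<Longrightarrow> \<gamma> $ i \<ge> 0 \<and> \<nu> $ i \<ge> 0"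
    using MS SB unfolding M_stationary_def IA II IB unfolding xs by auto
  have Adpos: "dl0 $ i > 0" if i: "r0 $ i = 0" "Q a0 $ i > dl0 $ i" for i
  proof (rule ccontr)
    assume "\<not> dl0 $ i > 0"
    then have d0: "dl0 $ i = 0" using F5[of i] by simp
    have nz: "((0::real^'d), (0::real^'m), (0::real^'m), (0::real^'k), (0::real^'m), (0::real^'m), (axis i 1::real^'m)) \<noteq> 0"
      by (simp add: zero_prod_def axis_eq_0_iff)
    have cone: "((0::real^'d), (0::real^'m), (0::real^'m), (0::real^'k), (0::real^'m), (0::real^'m), (axis i 1::real^'m)) \<in> critical_cone Kx Ky gradJ hessD Q JQ xs"
      unfolding critical_cone_def xs using i d0 by (auto simp: axis_def idxI_def idxA_def idxB_def)
    note pos = SOSC[OF MS cone nz]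
    have "i \<notin> idxI Q xs" "i \<notin> idxB Q xs" using i unfolding II IB by auto
    then have "(\<Sum>j\<in>idxI Q xs. (dl0 $ j * \<nu> $ j - 2) * ((axis i 1 :: real^'m) $ j)\<^sup>2) = 0"
        "(\<Sum>j\<in>idxB Q xs. (dl0 $ j * \<nu> $ j - 1) * ((axis i 1 :: real^'m) $ j)\<^sup>2) = 0"
      by (auto intro!: sum.neutral simp: axis_def)
    then show False using pos unfolding xs by simp
  qed
  have Bdpos: "dl0 $ i > 0" if i: "r0 $ i = 0" "Q a0 $ i = dl0 $ i" for i
  proof -
    have "i \<in> idxB Q xs" using i unfolding IB by simp
    then have "Q a0 $ i \<noteq> 0" using B_cap unfolding xs by auto
    then show ?thesis using i F5[of i] by simp
  qed
  have hessD_cont: "isCont hessD u" for u using has_derivative_continuous[OF D_d3] .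
  have mv_cont: "isCont (\<lambda>y. hessD y *v h) u" for u h
    using continuous_at_compose[OF hessD_cont linear_continuous_at[OF bl_mv[of h]]] by (simp add: o_def)
  have D3_cont: "isCont (\<lambda>y. D3 y k) u" for u k
    using D_C3[of k] by (simp add: continuous_on_eq_continuous_at)
  have mv3_cont: "isCont (\<lambda>y. D3 y k *v h) u" for u k h
    using continuous_at_compose[OF D3_cont linear_continuous_at[OF bl_mv[of h]]] by (simp add: o_def)
  have dmv: "((\<lambda>y. hessD y *v h) has_derivative (\<lambda>k. D3 x k *v h)) (at x)" for x h
    using bounded_linear.has_derivative[OF bl_mv D_d3] .
  have S1: "(hessD u *v k) \<bullet> h = (hessD u *v h) \<bullet> k" for u h k
    by (rule schwarz[where f=D and Fa="\<lambda>x h. gradD x \<bullet> h" and Fb="\<lambda>x h k. (hessD x *v k) \<bullet> h"])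
      (auto intro!: D_d1 has_derivative_inner_left[OF D_d2] continuous_intros mv_cont)
  have S2: "(D3 u0 k *v h) \<bullet> c = (D3 u0 h *v k) \<bullet> c" for h k c
    by (rule schwarz[where f="\<lambda>u. gradD u \<bullet> c" and Fa="\<lambda>x h. (hessD x *v h) \<bullet> c" and Fb="\<lambda>x h k. (D3 x k *v h) \<bullet> c"])
      (auto intro!: has_derivative_inner_left[OF D_d2] has_derivative_inner_left[OF dmv] continuous_intros mv3_cont)
  have S3: "(D3 u0 a *v b) \<bullet> c = (D3 u0 a *v c) \<bullet> b" for a b c
  proof -
    have e: "(\<lambda>u. (hessD u *v b) \<bullet> c) = (\<lambda>u. (hessD u *v c) \<bullet> b)" using S1 by auto
    have d1: "((\<lambda>u. (hessD u *v b) \<bullet> c) has_derivative (\<lambda>k. (D3 u0 k *v b) \<bullet> c)) (at u0)"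
      using has_derivative_inner_left[OF dmv] .
    have d2: "((\<lambda>u. (hessD u *v b) \<bullet> c) has_derivative (\<lambda>k. (D3 u0 k *v c) \<bullet> b)) (at u0)"
      unfolding e using has_derivative_inner_left[OF dmv] .
    show ?thesis using has_derivative_unique[OF d1 d2] by metis
  qed
  have D3sym: "(D3 u0 v *v v) \<bullet> p = (D3 u0 p *v v) \<bullet> v" for v
    using S3[of v v p] S2[of v p v] by simp
  have key: False if
    YF: "\<And>n. feasible_TV Kx Ky gradD Q (Y n)" and YJ: "\<And>n. J (fst (Y n)) \<le> J u0"
    and Yne: "\<And>n. Y n \<noteq> xs" and Ylim: "Y \<longlonglongrightarrow> xs"
    and Dlim: "(\<lambda>n. (Y n - xs) /\<^sub>R norm (Y n - xs)) \<longlonglongrightarrow> d" for Y d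
  proof -
    define t where "t n = norm (Y n - xs)" for n
    have tpos: "t n > 0" for n using Yne[of n] by (simp add: t_def)
    define u where "u n = fst (Y n)" for n
    define qx where "qx n = fst (snd (Y n))" for n
    define qy where "qy n = fst (snd (snd (Y n)))" for n
    define al where "al n = fst (snd (snd (snd (Y n))))" for n
    define r where "r n = fst (snd (snd (snd (snd (Y n)))))" for n
    define dl where "dl n = fst (snd (snd (snd (snd (snd (Y n))))))" for n
    define th where "th n = snd (snd (snd (snd (snd (snd (Y n))))))" for n
    have Yeq: "Y n = (u n, qx n, qy n, al n, r n, dl n, th n)" for n
      by (simp add: u_def qx_def qy_def al_def r_def dl_def th_def)
    obtain du dqx dqy da dr dd dt where deq: "d = (du, dqx, dqy, da, dr, dd, dt)"
      by (metis prod.collapse)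
    have DL: "(\<lambda>n. (Y n - xs) /\<^sub>R t n) \<longlonglongrightarrow> d" using Dlim unfolding t_def .
    have nd: "norm d = 1"
    proof -
      have "(\<lambda>n. norm ((Y n - xs) /\<^sub>R t n)) = (\<lambda>n. 1)" using tpos by (auto simp: t_def)
      then have "(\<lambda>n. 1::real) \<longlonglongrightarrow> norm d" using tendsto_norm[OF DL] by simp
      then show ?thesis using LIMSEQ_unique[OF tendsto_const] by metis
    qed
    have Lu: "(\<lambda>n. (u n - u0) /\<^sub>R t n) \<longlonglongrightarrow> du"
      using tendsto_fst[OF DL] by (simp add: Yeq xs deq)
    have Lqx: "(\<lambda>n. (qx n - qx0) /\<^sub>R t n) \<longlonglongrightarrow> dqx"
      using tendsto_fst[OF tendsto_snd[OF DL]] by (simp add: Yeq xs deq)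
    have Lqy: "(\<lambda>n. (qy n - qy0) /\<^sub>R t n) \<longlonglongrightarrow> dqy"
      using tendsto_fst[OF tendsto_snd[OF tendsto_snd[OF DL]]] by (simp add: Yeq xs deq)
    have La: "(\<lambda>n. (al n - a0) /\<^sub>R t n) \<longlonglongrightarrow> da"
      using tendsto_fst[OF tendsto_snd[OF tendsto_snd[OF tendsto_snd[OF DL]]]] by (simp add: Yeq xs deq)
    have Lr: "(\<lambda>n. (r n - r0) /\<^sub>R t n) \<longlonglongrightarrow> dr"
      using tendsto_fst[OF tendsto_snd[OF tendsto_snd[OF tendsto_snd[OF tendsto_snd[OF DL]]]]] by (simp add: Yeq xs deq)
    have Ld: "(\<lambda>n. (dl n - dl0) /\<^sub>R t n) \<longlonglongrightarrow> dd"
      using tendsto_fst[OF tendsto_snd[OF tendsto_snd[OF tendsto_snd[OF tendsto_snd[OF tendsto_snd[OF DL]]]]]] by (simp add: Yeq xs deq)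
    have Lt: "(\<lambda>n. (th n - th0) /\<^sub>R t n) \<longlonglongrightarrow> dt"
      using tendsto_snd[OF tendsto_snd[OF tendsto_snd[OF tendsto_snd[OF tendsto_snd[OF tendsto_snd[OF DL]]]]]] by (simp add: Yeq xs deq)
    have Cu: "u \<longlonglongrightarrow> u0" using tendsto_fst[OF Ylim] by (simp add: Yeq xs)
    have Ca: "al \<longlonglongrightarrow> a0" using tendsto_fst[OF tendsto_snd[OF tendsto_snd[OF tendsto_snd[OF Ylim]]]] by (simp add: Yeq xs)
    have Cr: "r \<longlonglongrightarrow> r0" using tendsto_fst[OF tendsto_snd[OF tendsto_snd[OF tendsto_snd[OF tendsto_snd[OF Ylim]]]]] by (simp add: Yeq xs)
    have Cd: "dl \<longlonglongrightarrow> dl0" using tendsto_fst[OF tendsto_snd[OF tendsto_snd[OF tendsto_snd[OF tendsto_snd[OF tendsto_snd[OF Ylim]]]]]] by (simp add: Yeq xs)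
    have Ct: "th \<longlonglongrightarrow> th0" using tendsto_snd[OF tendsto_snd[OF tendsto_snd[OF tendsto_snd[OF tendsto_snd[OF tendsto_snd[OF Ylim]]]]]] by (simp add: Yeq xs)
    have G1: "\<And>n. gradD (u n) + transpose Kx *v qx n + transpose Ky *v qy n = 0"
      and G2: "\<And>n i. (Kx *v u n) $ i = r n $ i * cos (th n $ i) \<and> (Ky *v u n) $ i = r n $ i * sin (th n $ i)"
      and G3: "\<And>n i. qx n $ i = dl n $ i * cos (th n $ i) \<and> qy n $ i = dl n $ i * sin (th n $ i)"
      and G4: "\<And>n i. Q (al n) $ i \<ge> 0" and G5: "\<And>n i. dl n $ i \<ge> 0"
      and G6: "\<And>n i. r n $ i \<ge> 0 \<and> Q (al n) $ i - dl n $ i \<ge> 0 \<and> r n $ i * (Q (al n) $ i - dl n $ i) = 0"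
      using YF unfolding feasible_TV_def Yeq by auto
    have CQ: "(\<lambda>n. Q (al n)) \<longlonglongrightarrow> Q a0"
      using isCont_tendsto_compose[OF has_derivative_continuous[OF Q_d1] Ca] .
    have LQ: "(\<lambda>n. (Q (al n) - Q a0) /\<^sub>R t n) \<longlonglongrightarrow> JQ a0 *v da" using seq_deriv1[OF Q_d1 Ca La tpos] .
    have LgD: "(\<lambda>n. (gradD (u n) - gradD u0) /\<^sub>R t n) \<longlonglongrightarrow> hessD u0 *v du" using seq_deriv1[OF D_d2 Cu Lu tpos] .
    have LJ: "(\<lambda>n. (J (u n) - J u0) /\<^sub>R t n) \<longlonglongrightarrow> gradJ u0 \<bullet> du" using seq_deriv1[OF J_d1 Cu Lu tpos] .
    have YJ': "J (u n) \<le> J u0" for n using YJ[of n] by (simp add: Yeq)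
    have c1: "gradJ u0 \<bullet> du \<le> 0"
      by (rule LIMSEQ_le_const2[OF LJ]) (use YJ' tpos in \<open>auto intro!: mult_nonneg_nonpos simp: less_imp_le\<close>)
    have c2: "- (hessD u0 *v du) - transpose Kx *v dqx - transpose Ky *v dqy = 0"
    proof -
      have e: "(gradD (u n) - gradD u0) /\<^sub>R t n = - (transpose Kx *v ((qx n - qx0) /\<^sub>R t n) + transpose Ky *v ((qy n - qy0) /\<^sub>R t n))" for n
      proof -
        have h1: "gradD (u n) = - (transpose Kx *v qx n + transpose Ky *v qy n)" using G1[of n]
          by (metis add.assoc eq_neg_iff_add_eq_0)
        have h2: "gradD u0 = - (transpose Kx *v qx0 + transpose Ky *v qy0)" using Fa
          by (metis add.assoc eq_neg_iff_add_eq_0)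
        show ?thesis unfolding h1 h2 by (simp add: algebra_simps del: transpose_matrix_vector)
      qed
      have "(\<lambda>n. (gradD (u n) - gradD u0) /\<^sub>R t n) \<longlonglongrightarrow> - (transpose Kx *v dqx + transpose Ky *v dqy)"
        unfolding e
        by (intro tendsto_minus tendsto_add bounded_linear.tendsto[OF matrix_vector_mul_bounded_linear] Lqx Lqy)
      then have h: "hessD u0 *v du = - (transpose Kx *v dqx + transpose Ky *v dqy)" using LIMSEQ_unique[OF LgD] by blast
      show ?thesis unfolding h by (simp add: algebra_simps del: transpose_matrix_vector)
    qed
    have Lri: "(\<lambda>n. (r n $ i - r0 $ i) / t n) \<longlonglongrightarrow> dr $ i" for i using lim_comp[OF Lr] .
    have Ldi: "(\<lambda>n. (dl n $ i - dl0 $ i) / t n) \<longlonglongrightarrow> dd $ i" for i using lim_comp[OF Ld] .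
    have Lti: "(\<lambda>n. (th n $ i - th0 $ i) / t n) \<longlonglongrightarrow> dt $ i" for i using lim_comp[OF Lt] .
    have Cri: "(\<lambda>n. r n $ i) \<longlonglongrightarrow> r0 $ i" for i using tendsto_vec_nth[OF Cr] .
    have Cdi: "(\<lambda>n. dl n $ i) \<longlonglongrightarrow> dl0 $ i" for i using tendsto_vec_nth[OF Cd] .
    have Cti: "(\<lambda>n. th n $ i) \<longlonglongrightarrow> th0 $ i" for i using tendsto_vec_nth[OF Ct] .
    have LKx: "(\<lambda>n. ((Kx *v u n) $ i - (Kx *v u0) $ i) / t n) \<longlonglongrightarrow> (Kx *v du) $ i" for i
    proof -
      have "(\<lambda>n. Kx *v ((u n - u0) /\<^sub>R t n)) \<longlonglongrightarrow> Kx *v du"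
        by (intro bounded_linear.tendsto[OF matrix_vector_mul_bounded_linear] Lu)
      from tendsto_vec_nth[OF this, of i] show ?thesis by (simp add: algebra_simps divide_inverse_commute)
    qed
    have LKy: "(\<lambda>n. ((Ky *v u n) $ i - (Ky *v u0) $ i) / t n) \<longlonglongrightarrow> (Ky *v du) $ i" for i
    proof -
      have "(\<lambda>n. Ky *v ((u n - u0) /\<^sub>R t n)) \<longlonglongrightarrow> Ky *v du"
        by (intro bounded_linear.tendsto[OF matrix_vector_mul_bounded_linear] Lu)
      from tendsto_vec_nth[OF this, of i] show ?thesis by (simp add: algebra_simps divide_inverse_commute)
    qed
    have c3: "- (Kx *v du) $ i + cos (th0 $ i) * dr $ i - r0 $ i * sin (th0 $ i) * dt $ i = 0" for i
    proof -
      have "(Kx *v du) $ i = cos (th0 $ i) * dr $ i - r0 $ i * sin (th0 $ i) * dt $ i"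
      proof -
        have L: "(\<lambda>n. (r n $ i * cos (th n $ i) - r0 $ i * cos (th0 $ i)) / t n) \<longlonglongrightarrow> (Kx *v du) $ i" using LKx[of i] by (simp add: G2 Fb)
        show ?thesis using LIMSEQ_unique[OF L trig_seq(1)[OF Cri Cti Lri Lti tpos]] .
      qed
      then show ?thesis by simp
    qed
    have c4: "- (Ky *v du) $ i + sin (th0 $ i) * dr $ i + r0 $ i * cos (th0 $ i) * dt $ i = 0" for i
    proof -
      have "(Ky *v du) $ i = sin (th0 $ i) * dr $ i + r0 $ i * cos (th0 $ i) * dt $ i"
      proof -
        have L: "(\<lambda>n. (r n $ i * sin (th n $ i) - r0 $ i * sin (th0 $ i)) / t n) \<longlonglongrightarrow> (Ky *v du) $ i" using LKy[of i] by (simp add: G2 Fb)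
        show ?thesis using LIMSEQ_unique[OF L trig_seq(2)[OF Cri Cti Lri Lti tpos]] .
      qed
      then show ?thesis by simp
    qed
    have c5: "dqx $ i - cos (th0 $ i) * dd $ i + dl0 $ i * sin (th0 $ i) * dt $ i = 0" for i
    proof -
      have "dqx $ i = cos (th0 $ i) * dd $ i - dl0 $ i * sin (th0 $ i) * dt $ i"
      proof -
        have L: "(\<lambda>n. (dl n $ i * cos (th n $ i) - dl0 $ i * cos (th0 $ i)) / t n) \<longlonglongrightarrow> dqx $ i" using lim_comp[OF Lqx, of i] by (simp add: G3 F3)
        show ?thesis using LIMSEQ_unique[OF L trig_seq(1)[OF Cdi Cti Ldi Lti tpos]] .
      qed
      then show ?thesis by simp
    qed
    have c6: "dqy $ i - sin (th0 $ i) * dd $ i - dl0 $ i * cos (th0 $ i) * dt $ i = 0" for i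
    proof -
      have "dqy $ i = sin (th0 $ i) * dd $ i + dl0 $ i * cos (th0 $ i) * dt $ i"
      proof -
        have L: "(\<lambda>n. (dl n $ i * sin (th n $ i) - dl0 $ i * sin (th0 $ i)) / t n) \<longlonglongrightarrow> dqy $ i" using lim_comp[OF Lqy, of i] by (simp add: G3 F3)
        show ?thesis using LIMSEQ_unique[OF L trig_seq(2)[OF Cdi Cti Ldi Lti tpos]] .
      qed
      then show ?thesis by simp
    qed
    have LQi: "(\<lambda>n. (Q (al n) $ i - Q a0 $ i) / t n) \<longlonglongrightarrow> (JQ a0 *v da) $ i" for i using lim_comp[OF LQ] .
    have c7: "(JQ a0 *v da) $ i \<ge> 0" if "Q a0 $ i = 0" for i
      by (rule LIMSEQ_le_const[OF LQi]) (use that G4 tpos in \<open>auto intro!: divide_nonneg_pos\<close>)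
    have c8: "dd $ i \<ge> 0" if "dl0 $ i = 0" for i
      by (rule LIMSEQ_le_const[OF Ldi]) (use that G5 tpos in \<open>auto intro!: divide_nonneg_pos\<close>)
    have evI: "eventually (\<lambda>n. Q (al n) $ i = dl n $ i) sequentially" if "r0 $ i > 0" for i
    proof -
      have "eventually (\<lambda>n. r n $ i > 0) sequentially" using order_tendstoD(1)[OF Cri that] .
      then show ?thesis by (rule eventually_mono) (use G6 in force)
    qed
    have evA: "eventually (\<lambda>n. r n $ i = 0) sequentially" if "Q a0 $ i > dl0 $ i" for i
    proof -
      have "(\<lambda>n. Q (al n) $ i - dl n $ i) \<longlonglongrightarrow> Q a0 $ i - dl0 $ i"
        using tendsto_diff[OF tendsto_vec_nth[OF CQ] Cdi] .
      moreover have "0 < Q a0 $ i - dl0 $ i" using that by simp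
      ultimately have "eventually (\<lambda>n. Q (al n) $ i - dl n $ i > 0) sequentially" by (rule order_tendstoD(1))
      then show ?thesis by (rule eventually_mono) (use G6 in force)
    qed
    have c9: "(JQ a0 *v da) $ i = dd $ i" if "r0 $ i > 0" "Q a0 $ i = dl0 $ i" for i
    proof -
      have "eventually (\<lambda>n. (Q (al n) $ i - Q a0 $ i) / t n = (dl n $ i - dl0 $ i) / t n) sequentially"
        using evI[OF that(1)] that(2) by (auto elim: eventually_mono)
      then have "(\<lambda>n. (dl n $ i - dl0 $ i) / t n) \<longlonglongrightarrow> (JQ a0 *v da) $ i"
        by (rule Lim_transform_eventually[OF LQi])
      from LIMSEQ_unique[OF this Ldi] show ?thesis by simp
    qed
    have c10: "dr $ i = 0" if "r0 $ i = 0" "Q a0 $ i > dl0 $ i" for i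
    proof -
      have "eventually (\<lambda>n. 0 = (r n $ i - r0 $ i) / t n) sequentially"
        using evA[OF that(2)] that(1) by (auto elim: eventually_mono)
      then have "(\<lambda>n. (r n $ i - r0 $ i) / t n) \<longlonglongrightarrow> 0" by (rule Lim_transform_eventually[OF tendsto_const])
      from LIMSEQ_unique[OF this Lri] show ?thesis by simp
    qed
    have c11: "0 \<le> (JQ a0 *v da) $ i - dd $ i \<and> 0 \<le> dr $ i \<and> ((JQ a0 *v da) $ i - dd $ i) * dr $ i = 0"
      if "r0 $ i = 0" "Q a0 $ i = dl0 $ i" for i
    proof (intro conjI)
      have L1: "(\<lambda>n. (Q (al n) $ i - Q a0 $ i) / t n - (dl n $ i - dl0 $ i) / t n) \<longlonglongrightarrow> (JQ a0 *v da) $ i - dd $ i"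
        using tendsto_diff[OF LQi Ldi] .
      show "0 \<le> (JQ a0 *v da) $ i - dd $ i"
        by (rule LIMSEQ_le_const[OF L1]) (use that G6 tpos in \<open>auto intro!: divide_nonneg_pos simp: diff_divide_distrib[symmetric]\<close>)
      show "0 \<le> dr $ i"
        by (rule LIMSEQ_le_const[OF Lri]) (use that G6 tpos in \<open>auto intro!: divide_nonneg_pos\<close>)
      have LP: "(\<lambda>n. ((Q (al n) $ i - Q a0 $ i) / t n - (dl n $ i - dl0 $ i) / t n) * ((r n $ i - r0 $ i) / t n))
          \<longlonglongrightarrow> ((JQ a0 *v da) $ i - dd $ i) * dr $ i"
        using tendsto_mult[OF L1 Lri] .
      have EQ: "(\<lambda>n. ((Q (al n) $ i - Q a0 $ i) / t n - (dl n $ i - dl0 $ i) / t n) * ((r n $ i - r0 $ i) / t n)) = (\<lambda>n. 0)"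
      proof (rule ext)
        fix n
        have "(Q (al n) $ i - dl n $ i) * r n $ i = 0" using G6[of n i] by (simp add: mult.commute)
        then show "((Q (al n) $ i - Q a0 $ i) / t n - (dl n $ i - dl0 $ i) / t n) * ((r n $ i - r0 $ i) / t n) = 0"
          using that by (simp add: diff_divide_distrib[symmetric] algebra_simps)
      qed
      have "(\<lambda>n. 0::real) \<longlonglongrightarrow> ((JQ a0 *v da) $ i - dd $ i) * dr $ i" using LP unfolding EQ .
      then show "((JQ a0 *v da) $ i - dd $ i) * dr $ i = 0" using LIMSEQ_unique[OF tendsto_const] by metis
    qed
    have cone: "(du, dqx, dqy, da, dr, dd, dt) \<in> critical_cone Kx Ky gradJ hessD Q JQ xs"
    proof -
      have iI: "idxI Q (u0, qx0, qy0, a0, r0, dl0, th0) = {i. r0 $ i > 0 \<and> Q a0 $ i = dl0 $ i}" by (simp add: idxI_def)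
      have iA: "idxA Q (u0, qx0, qy0, a0, r0, dl0, th0) = {i. r0 $ i = 0 \<and> Q a0 $ i > dl0 $ i}" by (simp add: idxA_def)
      have iB: "idxB Q (u0, qx0, qy0, a0, r0, dl0, th0) = {i. r0 $ i = 0 \<and> Q a0 $ i = dl0 $ i}" by (simp add: idxB_def)
      show ?thesis unfolding critical_cone_def xs iI iA iB mem_Collect_eq prod.case
        apply (intro conjI allI ballI impI)
        using c1 apply simp
        using c2 apply simp
        using c3 apply simp
        using c4 apply simp
        using c5 apply simp
        using c6 apply simp
        using c7 apply simp
        using c8 apply simp
        using c9 apply simp
        using c10 apply simp
        using c11 apply simp
        using c11 apply simp
        using c11 apply simp
        done
    qed
    have dnz: "(du, dqx, dqy, da, dr, dd, dt) \<noteq> 0" using nd deq by auto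
    note pos = SOSC[OF MS cone dnz]
    have hJc: "isCont hessJ x" for x using J_C2 by (simp add: continuous_on_eq_continuous_at)
    have LA: "(\<lambda>n. (J (u n) - J u0 - gradJ u0 \<bullet> (u n - u0)) / (t n)^2) \<longlonglongrightarrow> (hessJ u0 *v du) \<bullet> du / 2"
    proof (rule seq_deriv2[where f=J and Fa="\<lambda>x h. gradJ x \<bullet> h" and Fb="\<lambda>x h k. (hessJ x *v k) \<bullet> h",
          OF J_d1 has_derivative_inner_left[OF J_d2] _ _ Cu Lu tpos])
      show "(hessJ y *v (c *\<^sub>R h)) \<bullet> (c *\<^sub>R h) = c\<^sup>2 * ((hessJ y *v h) \<bullet> h)" for y c h
        by (simp add: matrix_vector_mult_scaleR power2_eq_square)
      show "isCont (\<lambda>z. (hessJ (fst z) *v snd z) \<bullet> snd z) (u0, du)"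
        by (intro isCont_mv_inner isCont_o2[OF isCont_fst hJc] isCont_snd continuous_ident)
    qed
    have D3lin: "linear (D3 y)" for y using has_derivative_bounded_linear[OF D_d3] bounded_linear.linear by blast
    have D3exp: "D3 y h = (\<Sum>j\<in>UNIV. h $ j *\<^sub>R D3 y (axis j 1))" for y h
    proof -
      have "D3 y h = D3 y (\<Sum>j\<in>UNIV. h $ j *\<^sub>R axis j 1)"
        using basis_expansion[of h] by (simp add: scalar_mult_eq_scaleR)
      also have "\<dots> = (\<Sum>j\<in>UNIV. h $ j *\<^sub>R D3 y (axis j 1))"
        by (simp add: linear_sum[OF D3lin] linear_scale[OF D3lin])
      finally show ?thesis .
    qed
    have D3jc: "isCont (\<lambda>z. D3 (fst z) (snd z)) z0" for z0
    proof -
      have "(\<lambda>z. D3 (fst z) (snd z)) = (\<lambda>z. \<Sum>j\<in>UNIV. snd z $ j *\<^sub>R D3 (fst z) (axis j 1))"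
        by (rule ext) (rule D3exp)
      moreover have "isCont (\<lambda>z. \<Sum>j\<in>UNIV. snd z $ j *\<^sub>R D3 (fst z) (axis j 1)) z0"
        by (intro continuous_intros isCont_vec_nth isCont_snd isCont_o2[OF isCont_fst D3_cont] continuous_ident)
      ultimately show ?thesis by simp
    qed
    have LB: "(\<lambda>n. (gradD (u n) \<bullet> p - gradD u0 \<bullet> p - (hessD u0 *v (u n - u0)) \<bullet> p) / (t n)^2) \<longlonglongrightarrow> (D3 u0 du *v du) \<bullet> p / 2"
    proof (rule seq_deriv2[where f="\<lambda>u. gradD u \<bullet> p" and Fa="\<lambda>x h. (hessD x *v h) \<bullet> p" and Fb="\<lambda>x h k. (D3 x k *v h) \<bullet> p",
          OF has_derivative_inner_left[OF D_d2] has_derivative_inner_left[OF dmv] _ _ Cu Lu tpos])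
      show "(D3 y (c *\<^sub>R h) *v (c *\<^sub>R h)) \<bullet> p = c\<^sup>2 * ((D3 y h *v h) \<bullet> p)" for y c h
        by (simp add: linear_scale[OF D3lin] smv matrix_vector_mult_scaleR power2_eq_square)
      show "isCont (\<lambda>z. (D3 (fst z) (snd z) *v snd z) \<bullet> p) (u0, du)"
        by (intro isCont_mv_inner D3jc isCont_snd continuous_intros continuous_ident)
    qed
    define cc where "cc = \<rho> + \<nu>"
    have HQc: "isCont (\<lambda>a. HQ a i) x" for i x using Q_C2[of i] by (simp add: continuous_on_eq_continuous_at)
    have LE: "(\<lambda>n. (cc \<bullet> Q (al n) - cc \<bullet> Q a0 - cc \<bullet> (JQ a0 *v (al n - a0))) / (t n)^2)
        \<longlonglongrightarrow> (\<Sum>i\<in>UNIV. cc $ i * ((HQ a0 i *v da) \<bullet> da)) / 2"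
    proof (rule seq_deriv2[where f="\<lambda>a. cc \<bullet> Q a" and Fa="\<lambda>x h. cc \<bullet> (JQ x *v h)" and Fb="\<lambda>x h k. \<Sum>i\<in>UNIV. cc $ i * ((HQ x i *v k) \<bullet> h)",
          OF has_derivative_inner_right[OF Q_d1] _ _ _ Ca La tpos])
      show "((\<lambda>y. cc \<bullet> (JQ y *v h)) has_derivative (\<lambda>k. \<Sum>i\<in>UNIV. cc $ i * ((HQ x i *v k) \<bullet> h))) (at x)" for x h
      proof -
        have e: "(\<lambda>y. cc \<bullet> (JQ y *v h)) = (\<lambda>y. \<Sum>i\<in>UNIV. cc $ i * (JQ y $ i \<bullet> h))"
          by (simp add: inner_vec_def matrix_vector_mult_def)
        show ?thesis unfolding e
          by (intro has_derivative_sum has_derivative_mult_right has_derivative_inner_left[OF Q_d2])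
      qed
      show "(\<Sum>i\<in>UNIV. cc $ i * ((HQ y i *v (c *\<^sub>R h)) \<bullet> (c *\<^sub>R h))) = c\<^sup>2 * (\<Sum>i\<in>UNIV. cc $ i * ((HQ y i *v h) \<bullet> h))" for y c h
        by (simp add: matrix_vector_mult_scaleR power2_eq_square sum_distrib_left algebra_simps)
      show "isCont (\<lambda>z. \<Sum>i\<in>UNIV. cc $ i * ((HQ (fst z) i *v snd z) \<bullet> snd z)) (a0, da)"
        by (intro continuous_intros isCont_mv_inner isCont_o2[OF isCont_fst HQc] isCont_snd continuous_ident)
    qed
    have LC: "(\<lambda>n. (trigf (fx$i) (fy$i) (lx$i) (ly$i) (r n $ i, dl n $ i, th n $ i) - trigf (fx$i) (fy$i) (lx$i) (ly$i) (r0 $ i, dl0 $ i, th0 $ i)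
        - trigf1 (fx$i) (fy$i) (lx$i) (ly$i) (r0 $ i, dl0 $ i, th0 $ i) ((r n $ i, dl n $ i, th n $ i) - (r0 $ i, dl0 $ i, th0 $ i))) / (t n)^2)
      \<longlonglongrightarrow> trigf2 (fx$i) (fy$i) (lx$i) (ly$i) (r0 $ i, dl0 $ i, th0 $ i) (dr $ i, dd $ i, dt $ i) (dr $ i, dd $ i, dt $ i) / 2" for i
    proof (rule trig2)
      show "(\<lambda>n. (r n $ i, dl n $ i, th n $ i)) \<longlonglongrightarrow> (r0 $ i, dl0 $ i, th0 $ i)"
        by (intro tendsto_Pair Cri Cdi Cti)
      have "(\<lambda>n. ((r n $ i - r0 $ i) / t n, (dl n $ i - dl0 $ i) / t n, (th n $ i - th0 $ i) / t n)) \<longlonglongrightarrow> (dr $ i, dd $ i, dt $ i)"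
        by (intro tendsto_Pair Lri Ldi Lti)
      then show "(\<lambda>n. ((r n $ i, dl n $ i, th n $ i) - (r0 $ i, dl0 $ i, th0 $ i)) /\<^sub>R t n) \<longlonglongrightarrow> (dr $ i, dd $ i, dt $ i)"
        by (simp add: divide_inverse_commute)
    qed (use tpos in auto)
    have gJ: "gradJ u0 = hessD u0 *v p + transpose Kx *v fx + transpose Ky *v fy"
    proof -
      have "gradJ u0 = (gradJ u0 - hessD u0 *v p - transpose Kx *v fx - transpose Ky *v fy) + (hessD u0 *v p + transpose Kx *v fx + transpose Ky *v fy)"
        by (simp add: algebra_simps del: transpose_matrix_vector)
      then show ?thesis unfolding M1 by simp
    qed
    have gDp: "gradD v \<bullet> p = - (qx' \<bullet> lx + qy' \<bullet> ly)" if "gradD v + transpose Kx *v qx' + transpose Ky *v qy' = 0" for v qx' qy'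
    proof -
      have "gradD v = - (transpose Kx *v qx' + transpose Ky *v qy')" using that by (metis add.assoc eq_neg_iff_add_eq_0)
      then show ?thesis by (simp add: inner_add_left inner_diff_left inner_minus_left tdot M3 del: transpose_matrix_vector)
    qed
    have I1: "J (u n) - J u0 = (J (u n) - J u0 - gradJ u0 \<bullet> (u n - u0)) - (gradD (u n) \<bullet> p - gradD u0 \<bullet> p - (hessD u0 *v (u n - u0)) \<bullet> p)
        + (fx \<bullet> (Kx *v u n - Kx *v u0) + fy \<bullet> (Ky *v u n - Ky *v u0) - lx \<bullet> (qx n - qx0) - ly \<bullet> (qy n - qy0))" for n
    proof -
      have e1: "gradJ u0 \<bullet> (u n - u0) = (hessD u0 *v (u n - u0)) \<bullet> p + fx \<bullet> (Kx *v u n - Kx *v u0) + fy \<bullet> (Ky *v u n - Ky *v u0)"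
        unfolding gJ using S1[of u0 p "u n - u0"]
        by (simp add: inner_add_left tdot matrix_vector_mult_diff_distrib del: transpose_matrix_vector)
      have e2: "gradD (u n) \<bullet> p = - (qx n \<bullet> lx + qy n \<bullet> ly)" using gDp[OF G1[of n]] .
      have e3: "gradD u0 \<bullet> p = - (qx0 \<bullet> lx + qy0 \<bullet> ly)" using gDp[OF Fa] .
      show ?thesis using e1 e2 e3 by (simp add: algebra_simps inner_diff_left inner_diff_right inner_commute)
    qed
    have I2: "fx \<bullet> (Kx *v u n - Kx *v u0) + fy \<bullet> (Ky *v u n - Ky *v u0) - lx \<bullet> (qx n - qx0) - ly \<bullet> (qy n - qy0)
        = (\<Sum>i\<in>UNIV. trigf (fx$i) (fy$i) (lx$i) (ly$i) (r n $ i, dl n $ i, th n $ i) - trigf (fx$i) (fy$i) (lx$i) (ly$i) (r0 $ i, dl0 $ i, th0 $ i))" for n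
    proof -
      have "trigf (fx$i) (fy$i) (lx$i) (ly$i) (r n $ i, dl n $ i, th n $ i) - trigf (fx$i) (fy$i) (lx$i) (ly$i) (r0 $ i, dl0 $ i, th0 $ i)
        = fx$i * ((Kx *v u n)$i - (Kx *v u0)$i) + fy$i * ((Ky *v u n)$i - (Ky *v u0)$i) - lx$i * (qx n$i - qx0$i) - ly$i * (qy n$i - qy0$i)" for i
        by (simp add: trigf_def G2 Fb G3 F3 algebra_simps)
      then show ?thesis by (simp add: inner_vec_def sum.distrib sum_subtractf)
    qed
    have I3: "trigf1 (fx$i) (fy$i) (lx$i) (ly$i) (r0 $ i, dl0 $ i, th0 $ i) ((r n $ i, dl n $ i, th n $ i) - (r0 $ i, dl0 $ i, th0 $ i))
        = (r n $ i - r0 $ i) * \<gamma> $ i - (dl n $ i - dl0 $ i) * (\<nu> $ i - \<sigma> $ i)" for n i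
    proof -
      have h1: "fx$i * cos (th0$i) + fy$i * sin (th0$i) = \<gamma>$i" using M4[of i] by (simp add: algebra_simps)
      have h2: "lx$i * cos (th0$i) + ly$i * sin (th0$i) = \<nu>$i - \<sigma>$i" using M5[of i] by (simp add: algebra_simps)
      have h3: "r0$i * (fy$i * cos (th0$i) - fx$i * sin (th0$i)) - dl0$i * (ly$i * cos (th0$i) - lx$i * sin (th0$i)) = 0"
        using M6[of i] by (simp add: algebra_simps)
      have tp: "(r n $ i, dl n $ i, th n $ i) - (r0 $ i, dl0 $ i, th0 $ i) = (r n $ i - r0 $ i, dl n $ i - dl0 $ i, th n $ i - th0 $ i)"
        by simp
      show ?thesis unfolding tp trigf1_def fst_conv snd_conv h1 h2 h3 by simp
    qed
    have evall: "eventually (\<lambda>n. \<forall>i. (r n $ i - r0 $ i) * \<gamma> $ i - (dl n $ i - dl0 $ i) * (\<nu> $ i - \<sigma> $ i)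
        + cc $ i * (Q (al n) $ i - Q a0 $ i) \<ge> 0) sequentially"
    proof (rule eventually_all_finite)
      fix i
      have base: "(r n $ i - r0 $ i) * \<gamma> $ i - (dl n $ i - dl0 $ i) * (\<nu> $ i - \<sigma> $ i) + cc $ i * (Q (al n) $ i - Q a0 $ i)
        = (r n $ i - r0 $ i) * \<gamma> $ i + \<nu> $ i * ((Q (al n) $ i - dl n $ i) - (Q a0 $ i - dl0 $ i)) + \<sigma> $ i * dl n $ i + \<rho> $ i * Q (al n) $ i" for n
        using M7[of i] M8[of i] unfolding cc_def by (auto simp: algebra_simps)
      have s1: "\<sigma> $ i * dl n $ i \<ge> 0" for n using M8[of i] G5[of n i] by simp
      have s2: "\<rho> $ i * Q (al n) $ i \<ge> 0" for n using M7[of i] G4[of n i] by simp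
      consider (A) "r0$i = 0" "Q a0$i > dl0$i" | (I) "r0$i > 0" "Q a0$i = dl0$i" | (B) "r0$i = 0" "Q a0$i = dl0$i"
        using F6[of i] by (cases "r0 $ i = 0"; cases "Q a0 $ i = dl0 $ i") auto
      then show "eventually (\<lambda>n. (r n $ i - r0 $ i) * \<gamma> $ i - (dl n $ i - dl0 $ i) * (\<nu> $ i - \<sigma> $ i)
        + cc $ i * (Q (al n) $ i - Q a0 $ i) \<ge> 0) sequentially"
      proof cases
        case A
        have nu: "\<nu> $ i = 0" using M9 A by simp
        show ?thesis using evA[OF A(2)]
        proof (rule eventually_mono)
          fix n assume "r n $ i = 0"
          then show "(r n $ i - r0 $ i) * \<gamma> $ i - (dl n $ i - dl0 $ i) * (\<nu> $ i - \<sigma> $ i)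
            + cc $ i * (Q (al n) $ i - Q a0 $ i) \<ge> 0" unfolding base using A nu s1[of n] s2[of n] by simp
        qed
      next
        case I
        have ga: "\<gamma> $ i = 0" using M10 I by simp
        show ?thesis using evI[OF I(1)]
        proof (rule eventually_mono)
          fix n assume "Q (al n) $ i = dl n $ i"
          then show "(r n $ i - r0 $ i) * \<gamma> $ i - (dl n $ i - dl0 $ i) * (\<nu> $ i - \<sigma> $ i)
            + cc $ i * (Q (al n) $ i - Q a0 $ i) \<ge> 0" unfolding base using I ga s1[of n] s2[of n] by simp
        qed
      next
        case B
        have gn: "\<gamma> $ i \<ge> 0" "\<nu> $ i \<ge> 0" using M11 B by auto
        show ?thesis
        proof (rule always_eventually, rule allI)
          fix n
          have "(r n $ i - r0 $ i) * \<gamma> $ i \<ge> 0" using B gn G6[of n i] by simp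
          moreover have "\<nu> $ i * ((Q (al n) $ i - dl n $ i) - (Q a0 $ i - dl0 $ i)) \<ge> 0" using B gn G6[of n i] by simp
          ultimately show "(r n $ i - r0 $ i) * \<gamma> $ i - (dl n $ i - dl0 $ i) * (\<nu> $ i - \<sigma> $ i)
            + cc $ i * (Q (al n) $ i - Q a0 $ i) \<ge> 0" unfolding base using s1[of n] s2[of n] by simp
        qed
      qed
    qed
    have ccJ: "cc \<bullet> (JQ a0 *v v) = 0" for v
      using tdot[of "JQ a0" cc v] M2 unfolding cc_def by simp
    have ccQ: "cc \<bullet> Q (al n) - cc \<bullet> Q a0 = (\<Sum>i\<in>UNIV. cc $ i * (Q (al n) $ i - Q a0 $ i))" for n
      by (simp add: inner_vec_def sum_subtractf[symmetric] right_diff_distrib)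
    define Cn where "Cn n i = trigf (fx$i) (fy$i) (lx$i) (ly$i) (r n $ i, dl n $ i, th n $ i) - trigf (fx$i) (fy$i) (lx$i) (ly$i) (r0 $ i, dl0 $ i, th0 $ i)
        - trigf1 (fx$i) (fy$i) (lx$i) (ly$i) (r0 $ i, dl0 $ i, th0 $ i) ((r n $ i, dl n $ i, th n $ i) - (r0 $ i, dl0 $ i, th0 $ i))" for n i
    define An where "An n = J (u n) - J u0 - gradJ u0 \<bullet> (u n - u0)" for n
    define Bn where "Bn n = gradD (u n) \<bullet> p - gradD u0 \<bullet> p - (hessD u0 *v (u n - u0)) \<bullet> p" for n
    define En where "En n = cc \<bullet> Q (al n) - cc \<bullet> Q a0 - cc \<bullet> (JQ a0 *v (al n - a0))" for n
    have evineq: "eventually (\<lambda>n. An n - Bn n + (\<Sum>i\<in>UNIV. Cn n i) - En n \<le> J (u n) - J u0) sequentially"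
      using evall
    proof (rule eventually_mono)
      fix n assume H: "\<forall>i. (r n $ i - r0 $ i) * \<gamma> $ i - (dl n $ i - dl0 $ i) * (\<nu> $ i - \<sigma> $ i) + cc $ i * (Q (al n) $ i - Q a0 $ i) \<ge> 0"
      have "J (u n) - J u0 = An n - Bn n + (\<Sum>i\<in>UNIV. Cn n i + ((r n $ i - r0 $ i) * \<gamma> $ i - (dl n $ i - dl0 $ i) * (\<nu> $ i - \<sigma> $ i)))"
        unfolding An_def Bn_def Cn_def I3[symmetric] using I1[of n] I2[of n] by simp
      also have "\<dots> = An n - Bn n + (\<Sum>i\<in>UNIV. Cn n i) + (\<Sum>i\<in>UNIV. (r n $ i - r0 $ i) * \<gamma> $ i - (dl n $ i - dl0 $ i) * (\<nu> $ i - \<sigma> $ i))"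
        by (simp add: sum.distrib)
      also have "\<dots> \<ge> An n - Bn n + (\<Sum>i\<in>UNIV. Cn n i) + (\<Sum>i\<in>UNIV. - (cc $ i * (Q (al n) $ i - Q a0 $ i)))"
        using H by (intro add_left_mono sum_mono) (simp add: algebra_simps)
      finally show "An n - Bn n + (\<Sum>i\<in>UNIV. Cn n i) - En n \<le> J (u n) - J u0"
        unfolding En_def ccJ using ccQ[of n] by (simp add: sum_negf)
    qed
    define Lv where "Lv = (hessJ u0 *v du) \<bullet> du / 2 - (D3 u0 du *v du) \<bullet> p / 2
       + (\<Sum>i\<in>UNIV. trigf2 (fx$i) (fy$i) (lx$i) (ly$i) (r0 $ i, dl0 $ i, th0 $ i) (dr $ i, dd $ i, dt $ i) (dr $ i, dd $ i, dt $ i) / 2)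
       - (\<Sum>i\<in>UNIV. cc $ i * ((HQ a0 i *v da) \<bullet> da)) / 2"
    have Lall: "(\<lambda>n. (An n - Bn n + (\<Sum>i\<in>UNIV. Cn n i) - En n) / (t n)^2) \<longlonglongrightarrow> Lv"
    proof -
      have e: "(An n - Bn n + (\<Sum>i\<in>UNIV. Cn n i) - En n) / (t n)^2 = An n / (t n)^2 - Bn n / (t n)^2 + (\<Sum>i\<in>UNIV. Cn n i / (t n)^2) - En n / (t n)^2" for n
        by (simp add: diff_divide_distrib add_divide_distrib sum_divide_distrib)
      show ?thesis unfolding e unfolding Lv_def An_def Bn_def En_def Cn_def
        by (intro tendsto_add tendsto_diff tendsto_sum LA LB LE LC)
    qed
    have Lneg: "Lv \<le> 0"
    proof (rule LIMSEQ_le_const2[OF Lall])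
      obtain N where N: "\<And>n. n \<ge> N \<Longrightarrow> An n - Bn n + (\<Sum>i\<in>UNIV. Cn n i) - En n \<le> J (u n) - J u0"
        using evineq unfolding eventually_sequentially by blast
      show "\<exists>N. \<forall>n\<ge>N. (An n - Bn n + (\<Sum>i\<in>UNIV. Cn n i) - En n) / (t n)^2 \<le> 0"
      proof (intro exI allI impI)
        fix n assume "n \<ge> N"
        then have "An n - Bn n + (\<Sum>i\<in>UNIV. Cn n i) - En n \<le> 0" using N YJ'[of n] by fastforce
        then show "(An n - Bn n + (\<Sum>i\<in>UNIV. Cn n i) - En n) / (t n)^2 \<le> 0"
          by (simp add: divide_nonpos_nonneg)
      qed
    qed
    define sI where "sI = {i. r0 $ i > 0 \<and> Q a0 $ i = dl0 $ i}"
    define sB where "sB = {i. r0 $ i = 0 \<and> Q a0 $ i = dl0 $ i}"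
    have disj: "sI \<inter> sB = {}" unfolding sI_def sB_def by auto
    have II': "idxI Q xs = sI" unfolding II sI_def ..
    have IB': "idxB Q xs = sB" unfolding IB sB_def ..
    have pos': "0 < (hessJ u0 *v du) \<bullet> du - (D3 u0 p *v du) \<bullet> du
          - (\<Sum>i\<in>sI \<union> sB. (fx $ i)\<^sup>2 + (fy $ i)\<^sup>2) * (opnormK Kx Ky)\<^sup>2 * (norm du)\<^sup>2
          - (\<Sum>i\<in>UNIV. (\<rho> $ i + \<nu> $ i) * (da \<bullet> (HQ a0 i *v da)))
          - (\<Sum>i\<in>sI. ((Kx *v p) $ i)\<^sup>2 + ((Ky *v p) $ i)\<^sup>2) * (\<Sum>i\<in>sI. ((JQ a0 *v da) $ i)\<^sup>2)
          + (\<Sum>i\<in>sI. (dl0 $ i * \<nu> $ i - 2) * (dt $ i)\<^sup>2)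
          + (\<Sum>i\<in>sB. (dl0 $ i * \<nu> $ i - 1) * (dt $ i)\<^sup>2)"
      using pos unfolding II' IB' unfolding xs by simp
    define T where "T i = trigf2 (fx$i) (fy$i) (lx$i) (ly$i) (r0 $ i, dl0 $ i, th0 $ i) (dr $ i, dd $ i, dt $ i) (dr $ i, dd $ i, dt $ i)" for i
    define Pe where "Pe i = fy$i * cos (th0$i) - fx$i * sin (th0$i)" for i
    define Le where "Le i = ly$i * cos (th0$i) - lx$i * sin (th0$i)" for i
    define Phi where "Phi i = (fx $ i)\<^sup>2 + (fy $ i)\<^sup>2" for i
    define Lam where "Lam i = (lx $ i)\<^sup>2 + (ly $ i)\<^sup>2" for i
    have rg: "r0 $ i * \<gamma> $ i = 0" for i
    proof (cases "r0 $ i = 0")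
      case False
      then have "r0 $ i > 0" using F6[of i] by simp
      moreover have "Q a0 $ i = dl0 $ i" using F6[of i] False by simp
      ultimately show ?thesis using M10 by simp
    qed simp
    have ds: "dl0 $ i * \<sigma> $ i = 0" for i using M8[of i] by simp
    have Tf: "T i = 2 * dr $ i * dt $ i * Pe i - 2 * dd $ i * dt $ i * Le i + (dt $ i)\<^sup>2 * (dl0 $ i * \<nu> $ i)" for i
    proof -
      have h1: "fx$i * cos (th0$i) + fy$i * sin (th0$i) = \<gamma>$i" using M4[of i] by (simp add: algebra_simps)
      have h2: "lx$i * cos (th0$i) + ly$i * sin (th0$i) = \<nu>$i - \<sigma>$i" using M5[of i] by (simp add: algebra_simps)
      have "T i = dr $ i * dt $ i * Pe i - dd $ i * dt $ i * Le i
          + dt $ i * (dr $ i * Pe i - dd $ i * Le i - dt $ i * (r0 $ i * \<gamma> $ i - dl0 $ i * (\<nu>$i - \<sigma>$i)))"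
        unfolding T_def trigf2_def fst_conv snd_conv h1 h2 Pe_def Le_def by simp
      also have "\<dots> = dr $ i * dt $ i * Pe i - dd $ i * dt $ i * Le i
          + dt $ i * (dr $ i * Pe i - dd $ i * Le i - dt $ i * (0 - (dl0 $ i * \<nu>$i - 0)))"
        unfolding rg right_diff_distrib[of "dl0 $ i"] ds ..
      finally show ?thesis by (simp add: power2_eq_square algebra_simps)
    qed
    have Le0: "Le i = 0" if "r0 $ i = 0" "dl0 $ i > 0" for i
    proof -
      have "r0$i * (fy$i * cos (th0$i) - fx$i * sin (th0$i)) - dl0$i * (ly$i * cos (th0$i) - lx$i * sin (th0$i)) = 0"
        using M6[of i] by (simp add: algebra_simps)
      then have "dl0 $ i * Le i = 0" using that unfolding Le_def by simp
      then show ?thesis using that by simp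
    qed
    have PePhi: "(Pe i)\<^sup>2 \<le> Phi i" for i unfolding Pe_def Phi_def by (rule trig_cs1)
    have LeLam: "(Le i)\<^sup>2 \<le> Lam i" for i unfolding Le_def Lam_def by (rule trig_cs1)
    define g where "g i = (if i \<in> sI then (dl0 $ i * \<nu> $ i - 2) * (dt $ i)\<^sup>2 - (dr $ i)\<^sup>2 * Phi i - (dd $ i)\<^sup>2 * Lam i
       else if i \<in> sB then (dl0 $ i * \<nu> $ i - 1) * (dt $ i)\<^sup>2 - (dr $ i)\<^sup>2 * Phi i else 0)" for i
    have Tg: "g i \<le> T i" for i
    proof -
      have y1: "2 * dr $ i * dt $ i * Pe i \<ge> - (dt $ i)\<^sup>2 - (dr $ i)\<^sup>2 * Phi i"
      proof -
        have "(dr $ i)\<^sup>2 * (Pe i)\<^sup>2 \<le> (dr $ i)\<^sup>2 * Phi i" using PePhi[of i] by (simp add: mult_left_mono)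
        then show ?thesis using young3[where a="dr $ i" and b="dt $ i" and c="Pe i"] by (simp add: power_mult_distrib)
      qed
      have y2: "- (2 * dd $ i * dt $ i * Le i) \<ge> - (dt $ i)\<^sup>2 - (dd $ i)\<^sup>2 * Lam i"
      proof -
        have "(dd $ i)\<^sup>2 * (Le i)\<^sup>2 \<le> (dd $ i)\<^sup>2 * Lam i" using LeLam[of i] by (simp add: mult_left_mono)
        then show ?thesis using young3[where a="- dd $ i" and b="dt $ i" and c="Le i"] by (simp add: power_mult_distrib)
      qed
      consider (I) "i \<in> sI" | (B) "i \<notin> sI" "i \<in> sB" | (A) "i \<notin> sI" "i \<notin> sB" by blast
      then show ?thesis
      proof cases
        case I
        then show ?thesis unfolding g_def Tf using y1 y2 by (simp add: algebra_simps)
      next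
        case B
        then have "r0 $ i = 0" "Q a0 $ i = dl0 $ i" unfolding sB_def by auto
        then have "Le i = 0" using Le0 Bdpos by simp
        then show ?thesis unfolding g_def Tf using B y1 by (simp add: algebra_simps)
      next
        case A
        then have a: "r0 $ i = 0" "Q a0 $ i > dl0 $ i" using F6[of i] unfolding sI_def sB_def by auto
        have "Le i = 0" using Le0 Adpos a by simp
        moreover have "dr $ i = 0" using c10 a by simp
        moreover have "\<nu> $ i = 0" using M9 a by simp
        ultimately show ?thesis unfolding g_def Tf using A by simp
      qed
    qed
    have sumT: "(\<Sum>i\<in>UNIV. T i) \<ge> (\<Sum>i\<in>sI. (dl0 $ i * \<nu> $ i - 2) * (dt $ i)\<^sup>2) + (\<Sum>i\<in>sB. (dl0 $ i * \<nu> $ i - 1) * (dt $ i)\<^sup>2)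
        - (\<Sum>i\<in>sI. (dr $ i)\<^sup>2 * Phi i) - (\<Sum>i\<in>sB. (dr $ i)\<^sup>2 * Phi i) - (\<Sum>i\<in>sI. (dd $ i)\<^sup>2 * Lam i)"
    proof -
      have "(\<Sum>i\<in>UNIV. g i) = (\<Sum>i\<in>sI. (dl0 $ i * \<nu> $ i - 2) * (dt $ i)\<^sup>2 - (dr $ i)\<^sup>2 * Phi i - (dd $ i)\<^sup>2 * Lam i)
          + (\<Sum>i\<in>sB. (dl0 $ i * \<nu> $ i - 1) * (dt $ i)\<^sup>2 - (dr $ i)\<^sup>2 * Phi i)"
        unfolding g_def by (rule sum_if2[OF disj])
      moreover have "(\<Sum>i\<in>UNIV. g i) \<le> (\<Sum>i\<in>UNIV. T i)" by (rule sum_mono) (rule Tg)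
      ultimately show ?thesis by (simp add: sum_subtractf)
    qed
    have drb: "(dr $ i)\<^sup>2 \<le> (opnormK Kx Ky)\<^sup>2 * (norm du)\<^sup>2" for i
    proof -
      have k1: "(Kx *v du) $ i = cos (th0 $ i) * dr $ i - r0 $ i * sin (th0 $ i) * dt $ i" using c3[of i] by simp
      have k2: "(Ky *v du) $ i = sin (th0 $ i) * dr $ i + r0 $ i * cos (th0 $ i) * dt $ i" using c4[of i] by simp
      have e: "dr $ i = (Kx *v du) $ i * cos (th0 $ i) + (Ky *v du) $ i * sin (th0 $ i)"
        unfolding k1 k2 using sin_cos_squared_add[of "th0 $ i"] by algebra
      have "(dr $ i)\<^sup>2 \<le> ((Kx *v du) $ i)\<^sup>2 + ((Ky *v du) $ i)\<^sup>2"
        unfolding e by (rule trig_cs2)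
      also have "\<dots> \<le> (norm (Kx *v du))\<^sup>2 + (norm (Ky *v du))\<^sup>2"
      proof (intro add_mono)
        show "((Kx *v du) $ i)\<^sup>2 \<le> (norm (Kx *v du))\<^sup>2"
          using power_mono[OF component_le_norm_cart[of "Kx *v du" i] abs_ge_zero, of 2] by simp
        show "((Ky *v du) $ i)\<^sup>2 \<le> (norm (Ky *v du))\<^sup>2"
          using power_mono[OF component_le_norm_cart[of "Ky *v du" i] abs_ge_zero, of 2] by simp
      qed
      also have "\<dots> = (norm (Kx *v du, Ky *v du))\<^sup>2" by (simp add: norm_Pair)
      also have "\<dots> \<le> (opnormK Kx Ky * norm du)\<^sup>2"
      proof (rule power_mono)
        have bl: "bounded_linear (\<lambda>u. (Kx *v u, Ky *v u))"
          by (rule bounded_linear_Pair) (rule matrix_vector_mul_bounded_linear)+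
        show "norm (Kx *v du, Ky *v du) \<le> opnormK Kx Ky * norm du"
          unfolding opnormK_def using onorm[OF bl, of du] by simp
      qed simp
      finally show ?thesis by (simp add: power_mult_distrib)
    qed
    have b1: "(\<Sum>i\<in>sI. (dr $ i)\<^sup>2 * Phi i) + (\<Sum>i\<in>sB. (dr $ i)\<^sup>2 * Phi i)
        \<le> (\<Sum>i\<in>sI \<union> sB. (fx $ i)\<^sup>2 + (fy $ i)\<^sup>2) * (opnormK Kx Ky)\<^sup>2 * (norm du)\<^sup>2"
    proof -
      have "(\<Sum>i\<in>sI. (dr $ i)\<^sup>2 * Phi i) + (\<Sum>i\<in>sB. (dr $ i)\<^sup>2 * Phi i) = (\<Sum>i\<in>sI \<union> sB. (dr $ i)\<^sup>2 * Phi i)"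
        by (rule sum.union_disjoint[symmetric]) (use disj in auto)
      also have "\<dots> \<le> (\<Sum>i\<in>sI \<union> sB. ((opnormK Kx Ky)\<^sup>2 * (norm du)\<^sup>2) * Phi i)"
        by (rule sum_mono) (rule mult_right_mono[OF drb], simp add: Phi_def)
      also have "\<dots> = (\<Sum>i\<in>sI \<union> sB. (fx $ i)\<^sup>2 + (fy $ i)\<^sup>2) * (opnormK Kx Ky)\<^sup>2 * (norm du)\<^sup>2"
        by (simp add: Phi_def sum_distrib_left sum_distrib_right algebra_simps)
      finally show ?thesis .
    qed
    have b2: "(\<Sum>i\<in>sI. (dd $ i)\<^sup>2 * Lam i)
        \<le> (\<Sum>i\<in>sI. ((Kx *v p) $ i)\<^sup>2 + ((Ky *v p) $ i)\<^sup>2) * (\<Sum>i\<in>sI. ((JQ a0 *v da) $ i)\<^sup>2)"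
    proof -
      have LL: "Lam i = ((Kx *v p) $ i)\<^sup>2 + ((Ky *v p) $ i)\<^sup>2" for i unfolding Lam_def M3 ..
      have "(\<Sum>i\<in>sI. (dd $ i)\<^sup>2 * Lam i) \<le> (\<Sum>i\<in>sI. ((JQ a0 *v da) $ i)\<^sup>2 * (\<Sum>j\<in>sI. Lam j))"
      proof (rule sum_mono)
        fix i assume i: "i \<in> sI"
        then have "dd $ i = (JQ a0 *v da) $ i" using c9 unfolding sI_def by simp
        moreover have "Lam i \<le> (\<Sum>j\<in>sI. Lam j)"
          using i by (intro member_le_sum) (auto simp: Lam_def)
        ultimately show "(dd $ i)\<^sup>2 * Lam i \<le> ((JQ a0 *v da) $ i)\<^sup>2 * (\<Sum>j\<in>sI. Lam j)"
          by (simp add: mult_left_mono)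
      qed
      also have "\<dots> = (\<Sum>i\<in>sI. ((JQ a0 *v da) $ i)\<^sup>2) * (\<Sum>j\<in>sI. Lam j)"
        by (rule sum_distrib_right[symmetric])
      also have "\<dots> = (\<Sum>i\<in>sI. ((Kx *v p) $ i)\<^sup>2 + ((Ky *v p) $ i)\<^sup>2) * (\<Sum>i\<in>sI. ((JQ a0 *v da) $ i)\<^sup>2)"
        unfolding LL by (simp add: mult.commute)
      finally show ?thesis .
    qed
    have L2: "2 * Lv = (hessJ u0 *v du) \<bullet> du - (D3 u0 p *v du) \<bullet> du + (\<Sum>i\<in>UNIV. T i)
        - (\<Sum>i\<in>UNIV. (\<rho> $ i + \<nu> $ i) * (da \<bullet> (HQ a0 i *v da)))"
    proof -
      have "(\<Sum>i\<in>UNIV. cc $ i * ((HQ a0 i *v da) \<bullet> da)) = (\<Sum>i\<in>UNIV. (\<rho> $ i + \<nu> $ i) * (da \<bullet> (HQ a0 i *v da)))"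
        unfolding cc_def by (simp add: inner_commute)
      then show ?thesis unfolding Lv_def T_def D3sym by (simp add: sum_divide_distrib[symmetric] algebra_simps)
    qed
    show False using pos' Lneg L2 sumT b1 b2 by linarith
  qed
  show ?thesis
  proof (rule ccontr)
    assume ns: "\<not> strict_local_min {x. feasible_TV Kx Ky gradD Q x} J xs"
    have "\<forall>n. \<exists>y. feasible_TV Kx Ky gradD Q y \<and> y \<noteq> xs \<and> dist y xs < 1 / (real n + 1) \<and> J (fst y) \<le> J u0"
    proof
      fix n
      have pos: "1 / (real n + 1) > 0" by simp
      have nn: "\<not> (\<exists>\<epsilon>>0. \<forall>y\<in>{x. feasible_TV Kx Ky gradD Q x}. y \<noteq> xs \<and> dist y xs < \<epsilon> \<longrightarrow> J (fst xs) < J (fst y))"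
        using ns feas unfolding strict_local_min_def by blast
      have fx: "fst xs = u0" by (simp add: xs)
      show "\<exists>y. feasible_TV Kx Ky gradD Q y \<and> y \<noteq> xs \<and> dist y xs < 1 / (real n + 1) \<and> J (fst y) \<le> J u0"
      proof -
        obtain y where "y \<in> {x. feasible_TV Kx Ky gradD Q x}" "y \<noteq> xs \<and> dist y xs < 1 / (real n + 1)"
          "\<not> J (fst xs) < J (fst y)"
          using nn pos by blast
        then show ?thesis unfolding fx by (intro exI[of _ y]) (simp add: not_less)
      qed
    qed
    then obtain y where yF: "\<And>n. feasible_TV Kx Ky gradD Q (y n)" and yne: "\<And>n. y n \<noteq> xs"
      and yd: "\<And>n. dist (y n) xs < 1 / (real n + 1)" and yJ: "\<And>n. J (fst (y n)) \<le> J u0"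
      by metis
    have ylim0: "(\<lambda>n. dist (y n) xs) \<longlonglongrightarrow> 0"
    proof (rule tendsto_sandwich[where f="\<lambda>n. 0" and h="\<lambda>n. 1 / (real n + 1)"])
      show "\<forall>\<^sub>F n in sequentially. 0 \<le> dist (y n) xs" by simp
      show "\<forall>\<^sub>F n in sequentially. dist (y n) xs \<le> 1 / (real n + 1)" using yd by (simp add: less_imp_le)
      show "(\<lambda>n. 0::real) \<longlonglongrightarrow> 0" by simp
      show "(\<lambda>n. 1 / (real n + 1)) \<longlonglongrightarrow> 0"
        using LIMSEQ_inverse_real_of_nat by (simp add: inverse_eq_divide add.commute)
    qed
    have ylim: "y \<longlonglongrightarrow> xs" using ylim0 tendsto_dist_iff by blast
    have sph: "(y n - xs) /\<^sub>R norm (y n - xs) \<in> sphere 0 1" for n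
      using yne[of n] by simp
    obtain d r where r: "strict_mono r" and dl: "((\<lambda>n. (y n - xs) /\<^sub>R norm (y n - xs)) \<circ> r) \<longlonglongrightarrow> d"
    proof -
      have sc: "seq_compact (sphere (0::('d,'m,'k) pt) 1)" using compact_imp_seq_compact[OF compact_sphere] .
      have "\<exists>l\<in>sphere 0 1. \<exists>r. strict_mono r \<and> ((\<lambda>n. (y n - xs) /\<^sub>R norm (y n - xs)) \<circ> r) \<longlonglongrightarrow> l"
        using sc sph unfolding seq_compact_def by (metis (no_types, lifting))
      then show ?thesis using that by blast
    qed
    show False
    proof (rule key[of "y \<circ> r" d])
      show "(y \<circ> r) \<longlonglongrightarrow> xs" using LIMSEQ_subseq_LIMSEQ[OF ylim r] .
      show "(\<lambda>n. ((y \<circ> r) n - xs) /\<^sub>R norm ((y \<circ> r) n - xs)) \<longlonglongrightarrow> d" using dl by (simp add: o_def)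
    qed (use yF yJ yne in auto)
  qed
qed

end
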